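(* Let $L$ be a Skolem-free first-order language, $T$ an $L$ theory and $\Gamma$ a set of $L$ formulas. Then $\mathrm{GSI}^\omega_\Gamma(\mathit{sk}^\exists(T))$ is inconsistent if and only if $T+\mathrm{IND}(\Gamma)$ is inconsistent.
   Context: Skolem symbols $\mathfrak{s}_{Qx\varphi}$: for each formula $Qx\varphi$ ($Q\in\{\forall,\exists\}$) a new function symbol of arity $|\mathrm{FV}(Qx\varphi)|$; $L$ is Skolem-free if it contains none of the Skolem symbols obtainable (iteratively) over $L$. $\mathit{sk}^\exists$/$\mathit{sk}^\forall$: $\mathit{sk}^Q$ fixes atoms, commutes with $\wedge,\vee$, $\mathit{sk}^Q(\neg A)=\neg\mathit{sk}^{\overline Q}(A)$, $\mathit{sk}^Q(QxA(x,\vec y))=\mathit{sk}^Q(A(\mathfrak{s}_{QxA}(\vec y),\vec y))$ with $\vec y$ exactly the free variables of $QxA$, $\mathit{sk}^Q(\overline QxA)=\overline Qx\,\mathit{sk}^Q(A)$; elementwise on theories. $I_x\varphi=\forall\vec z(\varphi(0,\vec z)\wedge\forall x(\varphi(x,\vec z)\to\varphi(s(x),\vec z))\to\forall x\varphi(x,\vec z))$, $\mathrm{IND}(\Gamma)=\{I_x\gamma:\gamma\in\Gamma\}$. $\Gamma\downarrow L'=\{\gamma(\vec x,t_1,\dots,t_n):\gamma(\vec x,z_1,\dots,z_n)\in\Gamma,\ t_i$ ground $L'$ terms$\}$; $\Delta^-$ = formulas of $\Delta$ with at most one free variable; $\mathrm{GSI}_\Gamma(T)=T+\mathit{sk}^\exists(\mathrm{IND}((\Gamma\downarrow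 L(T))^-))$, $\mathrm{GSI}^\omega_\Gamma(T)=\bigcup_i\mathrm{GSI}^i_\Gamma(T)$. *)

theory Defs
  imports Main
begin

text \<open>Variables are natural numbers (de Bruijn indices; a quantifier binds index 0).
  Function symbols are either ordinary symbols \<open>Sym f\<close> or Skolem symbols
  \<open>Sk Q A\<close>, the Skolem symbol of the quantified formula \<open>Q A\<close> (i.e. \<open>QxA\<close>).
  A function/predicate symbol together with its arity is a language symbol.\<close>

datatype quant = QAll | QEx

datatype ('f, 'p) tm = Var nat | Fn "('f, 'p) sym" "('f, 'p) tm list"
and ('f, 'p) sym = Sym 'f | Sk quant "('f, 'p) fm"
and ('f, 'p) fm =
    Atom 'p "('f, 'p) tm list"
  | Eq "('f, 'p) tm" "('f, 'p) tm"
  | Neg "('f, 'p) fm"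
  | Conj "('f, 'p) fm" "('f, 'p) fm"
  | Disj "('f, 'p) fm" "('f, 'p) fm"
  | All "('f, 'p) fm"
  | Ex "('f, 'p) fm"

definition Imp :: "('f, 'p) fm \<Rightarrow> ('f, 'p) fm \<Rightarrow> ('f, 'p) fm" where
  "Imp A B = Disj (Neg A) B"

fun qf :: "quant \<Rightarrow> ('f, 'p) fm \<Rightarrow> ('f, 'p) fm" where
  "qf QAll A = All A"
| "qf QEx A = Ex A"

fun dual :: "quant \<Rightarrow> quant" where
  "dual QAll = QEx"
| "dual QEx = QAll"

datatype ('f, 'p) lsym = FS "('f, 'p) sym" nat | PS 'p nat

fun fv_tm :: "('f, 'p) tm \<Rightarrow> nat set" where
  "fv_tm (Var n) = {n}"
| "fv_tm (Fn f ts) = (\<Union>t\<in>set ts. fv_tm t)"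

fun fv :: "('f, 'p) fm \<Rightarrow> nat set" where
  "fv (Atom p ts) = (\<Union>t\<in>set ts. fv_tm t)"
| "fv (Eq s t) = fv_tm s \<union> fv_tm t"
| "fv (Neg A) = fv A"
| "fv (Conj A B) = fv A \<union> fv B"
| "fv (Disj A B) = fv A \<union> fv B"
| "fv (All A) = {n. Suc n \<in> fv A}"
| "fv (Ex A) = {n. Suc n \<in> fv A}"

fun syms_tm :: "('f, 'p) tm \<Rightarrow> ('f, 'p) lsym set" where
  "syms_tm (Var n) = {}"
| "syms_tm (Fn f ts) = insert (FS f (length ts)) (\<Union>t\<in>set ts. syms_tm t)"

fun syms :: "('f, 'p) fm \<Rightarrow> ('f, 'p) lsym set" where
  "syms (Atom p ts) = insert (PS p (length ts)) (\<Union>t\<in>set ts. syms_tm t)"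
| "syms (Eq s t) = syms_tm s \<union> syms_tm t"
| "syms (Neg A) = syms A"
| "syms (Conj A B) = syms A \<union> syms B"
| "syms (Disj A B) = syms A \<union> syms B"
| "syms (All A) = syms A"
| "syms (Ex A) = syms A"

definition is_L_formula :: "('f, 'p) lsym set \<Rightarrow> ('f, 'p) fm \<Rightarrow> bool" where
  "is_L_formula L A \<longleftrightarrow> syms A \<subseteq> L"

definition is_L_theory :: "('f, 'p) lsym set \<Rightarrow> ('f, 'p) fm set \<Rightarrow> bool" where
  "is_L_theory L T \<longleftrightarrow> (\<forall>A\<in>T. is_L_formula L A \<and> fv A = {})"

definition ground_L_term :: "('f, 'p) lsym set \<Rightarrow> ('f, 'p) tm \<Rightarrow> bool" where
  "ground_L_term L t \<longleftrightarrow> fv_tm t = {} \<and> syms_tm t \<subseteq> L"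

fun subst_tm :: "(nat \<Rightarrow> ('f, 'p) tm) \<Rightarrow> ('f, 'p) tm \<Rightarrow> ('f, 'p) tm" where
  "subst_tm \<sigma> (Var n) = \<sigma> n"
| "subst_tm \<sigma> (Fn f ts) = Fn f (map (subst_tm \<sigma>) ts)"

definition lift_tm :: "('f, 'p) tm \<Rightarrow> ('f, 'p) tm" where
  "lift_tm t = subst_tm (\<lambda>n. Var (Suc n)) t"

definition up :: "(nat \<Rightarrow> ('f, 'p) tm) \<Rightarrow> nat \<Rightarrow> ('f, 'p) tm" where
  "up \<sigma> n = (case n of 0 \<Rightarrow> Var 0 | Suc m \<Rightarrow> lift_tm (\<sigma> m))"

fun subst :: "(nat \<Rightarrow> ('f, 'p) tm) \<Rightarrow> ('f, 'p) fm \<Rightarrow> ('f, 'p) fm" where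
  "subst \<sigma> (Atom p ts) = Atom p (map (subst_tm \<sigma>) ts)"
| "subst \<sigma> (Eq s t) = Eq (subst_tm \<sigma> s) (subst_tm \<sigma> t)"
| "subst \<sigma> (Neg A) = Neg (subst \<sigma> A)"
| "subst \<sigma> (Conj A B) = Conj (subst \<sigma> A) (subst \<sigma> B)"
| "subst \<sigma> (Disj A B) = Disj (subst \<sigma> A) (subst \<sigma> B)"
| "subst \<sigma> (All A) = All (subst (up \<sigma>) A)"
| "subst \<sigma> (Ex A) = Ex (subst (up \<sigma>) A)"

definition scons :: "('f, 'p) tm \<Rightarrow> (nat \<Rightarrow> ('f, 'p) tm) \<Rightarrow> nat \<Rightarrow> ('f, 'p) tm" where
  "scons t \<sigma> n = (case n of 0 \<Rightarrow> t | Suc m \<Rightarrow> \<sigma> m)"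

text \<open>\<open>inst t A\<close>: for \<open>QxA\<close> represented by \<open>qf Q A\<close>, this is \<open>A(t)\<close>.\<close>
definition inst :: "('f, 'p) tm \<Rightarrow> ('f, 'p) fm \<Rightarrow> ('f, 'p) fm" where
  "inst t A = subst (scons t Var) A"

definition lift :: "('f, 'p) fm \<Rightarrow> ('f, 'p) fm" where
  "lift A = subst (\<lambda>n. Var (Suc n)) A"

fun fsize :: "('f, 'p) fm \<Rightarrow> nat" where
  "fsize (Atom p ts) = 1"
| "fsize (Eq s t) = 1"
| "fsize (Neg A) = Suc (fsize A)"
| "fsize (Conj A B) = Suc (fsize A + fsize B)"
| "fsize (Disj A B) = Suc (fsize A + fsize B)"
| "fsize (All A) = Suc (fsize A)"
| "fsize (Ex A) = Suc (fsize A)"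

lemma fsize_subst[simp]: "fsize (subst \<sigma> A) = fsize A"
  by (induction \<sigma> A rule: subst.induct) auto

lemma fsize_inst[simp]: "fsize (inst t A) = fsize A"
  by (simp add: inst_def)

text \<open>The Skolem term \<open>\<s>_{QxA}(y\<^sub>1,\<dots>,y\<^sub>n)\<close>, where \<open>y\<^sub>1 < \<dots> < y\<^sub>n\<close> are exactly
  the free variables of \<open>QxA\<close>; its arity is \<open>|FV(QxA)|\<close>.\<close>
definition sk_term :: "quant \<Rightarrow> ('f, 'p) fm \<Rightarrow> ('f, 'p) tm" where
  "sk_term Q A = Fn (Sk Q A) (map Var (sorted_list_of_set (fv (qf Q A))))"

function sk :: "quant \<Rightarrow> ('f, 'p) fm \<Rightarrow> ('f, 'p) fm" where
  "sk Q (Atom p ts) = Atom p ts"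
| "sk Q (Eq s t) = Eq s t"
| "sk Q (Conj A B) = Conj (sk Q A) (sk Q B)"
| "sk Q (Disj A B) = Disj (sk Q A) (sk Q B)"
| "sk Q (Neg A) = Neg (sk (dual Q) A)"
| "sk Q (All A) = (if Q = QAll then sk Q (inst (sk_term QAll A) A) else All (sk Q A))"
| "sk Q (Ex A) = (if Q = QEx then sk Q (inst (sk_term QEx A) A) else Ex (sk Q A))"
  by pat_completeness auto
termination
  by (relation "measure (\<lambda>(Q, A). fsize A)") auto

definition sk_ex :: "('f, 'p) fm set \<Rightarrow> ('f, 'p) fm set" where
  "sk_ex T = sk QEx ` T"

inductive_set sk_syms :: "('f, 'p) lsym set \<Rightarrow> ('f, 'p) lsym set" for L where
  "\<forall>s\<in>syms (qf Q A). s \<in> L \<or> s \<in> sk_syms L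
   \<Longrightarrow> FS (Sk Q A) (card (fv (qf Q A))) \<in> sk_syms L"

definition skolem_free :: "('f, 'p) lsym set \<Rightarrow> bool" where
  "skolem_free L \<longleftrightarrow> L \<inter> sk_syms L = {}"

definition zero_tm :: "'f \<Rightarrow> ('f, 'p) tm" where
  "zero_tm z = Fn (Sym z) []"

definition suc_tm :: "'f \<Rightarrow> ('f, 'p) tm \<Rightarrow> ('f, 'p) tm" where
  "suc_tm s t = Fn (Sym s) [t]"

fun alls :: "nat \<Rightarrow> ('f, 'p) fm \<Rightarrow> ('f, 'p) fm" where
  "alls 0 A = A"
| "alls (Suc k) A = All (alls k A)"

text \<open>\<open>I_x \<phi>\<close> = \<open>\<forall>z\<^sub>1\<dots>z\<^sub>k (\<phi>(0,z) \<and> \<forall>x(\<phi>(x,z) \<rightarrow> \<phi>(s(x),z)) \<rightarrow> \<forall>x \<phi>(x,z))\<close>,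
  where \<open>z\<^sub>1 < \<dots> < z\<^sub>k\<close> are the free variables of \<open>\<phi>\<close> other than \<open>x\<close>.
  We first rename \<open>x\<close> to index 0 and \<open>z\<^sub>i\<close> to index \<open>i\<close>.\<close>
definition ind_ax :: "'f \<Rightarrow> 'f \<Rightarrow> nat \<Rightarrow> ('f, 'p) fm \<Rightarrow> ('f, 'p) fm" where
  "ind_ax z s x \<phi> =
    (let zs = sorted_list_of_set (fv \<phi> - {x});
         k = length zs;
         \<rho> = (\<lambda>v. if v = x then Var 0
                   else if v \<in> set zs then Var (Suc (card {u\<in>set zs. u < v}))
                   else Var v);
         \<psi> = subst \<rho> \<phi>
     in alls k (Imp (Conj (inst (zero_tm z) \<psi>)
                          (All (Imp \<psi> (subst (scons (suc_tm s (Var 0)) (\<lambda>n. Var (Suc n))) \<psi>))))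
                    (All \<psi>)))"

definition IND :: "'f \<Rightarrow> 'f \<Rightarrow> ('f, 'p) fm set \<Rightarrow> ('f, 'p) fm set" where
  "IND z s \<Gamma> = {ind_ax z s x \<gamma> | x \<gamma>. \<gamma> \<in> \<Gamma>}"

text \<open>\<open>\<Gamma>\<down>L'\<close>: instances of formulas of \<Gamma> in which some free variables are
  replaced by ground \<open>L'\<close> terms (the others are kept).\<close>
definition ground_inst :: "('f, 'p) fm set \<Rightarrow> ('f, 'p) lsym set \<Rightarrow> ('f, 'p) fm set" where
  "ground_inst \<Gamma> L' = {subst \<sigma> \<gamma> | \<sigma> \<gamma>. \<gamma> \<in> \<Gamma> \<and> (\<forall>v. \<sigma> v = Var v \<or> ground_L_term L' (\<sigma> v))}"

definition at_most_one_fv :: "('f, 'p) fm set \<Rightarrow> ('f, 'p) fm set" where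
  "at_most_one_fv \<Delta> = {A \<in> \<Delta>. card (fv A) \<le> 1}"

text \<open>A theory is represented together with its language: \<open>(L(T), T)\<close>.
  One GSI step; the language grows by the symbols of the new axioms.\<close>
definition GSI_step :: "'f \<Rightarrow> 'f \<Rightarrow> ('f, 'p) fm set
    \<Rightarrow> ('f, 'p) lsym set \<times> ('f, 'p) fm set \<Rightarrow> ('f, 'p) lsym set \<times> ('f, 'p) fm set" where
  "GSI_step z s \<Gamma> LT =
    (let N = sk_ex (IND z s (at_most_one_fv (ground_inst \<Gamma> (fst LT))))
     in (fst LT \<union> (\<Union>A\<in>N. syms A), snd LT \<union> N))"

definition GSI_omega :: "'f \<Rightarrow> 'f \<Rightarrow> ('f, 'p) fm set
    \<Rightarrow> ('f, 'p) lsym set \<times> ('f, 'p) fm set \<Rightarrow> ('f, 'p) fm set" where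
  "GSI_omega z s \<Gamma> LT = (\<Union>i. snd ((GSI_step z s \<Gamma> ^^ i) LT))"

definition sk_ex_theory :: "('f, 'p) lsym set \<Rightarrow> ('f, 'p) fm set
    \<Rightarrow> ('f, 'p) lsym set \<times> ('f, 'p) fm set" where
  "sk_ex_theory L T = (L \<union> (\<Union>A\<in>sk_ex T. syms A), sk_ex T)"

text \<open>Propositional evaluation, prime formulas (atoms, equations, quantified
  formulas) get arbitrary truth values.\<close>
fun peval :: "(('f, 'p) fm \<Rightarrow> bool) \<Rightarrow> ('f, 'p) fm \<Rightarrow> bool" where
  "peval v (Neg A) = (\<not> peval v A)"
| "peval v (Conj A B) = (peval v A \<and> peval v B)"
| "peval v (Disj A B) = (peval v A \<or> peval v B)"
| "peval v A = v A"

definition tautology :: "('f, 'p) fm \<Rightarrow> bool" where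
  "tautology A \<longleftrightarrow> (\<forall>v. peval v A)"

text \<open>A Hilbert-style calculus for first-order logic with equality
  (formulas of a theory are read as universally closed).\<close>
inductive prov :: "('f, 'p) fm set \<Rightarrow> ('f, 'p) fm \<Rightarrow> bool" for T where
  hyp: "A \<in> T \<Longrightarrow> prov T A"
| taut: "tautology A \<Longrightarrow> prov T A"
| mp: "prov T (Imp A B) \<Longrightarrow> prov T A \<Longrightarrow> prov T B"
| gen: "prov T A \<Longrightarrow> prov T (All A)"
| all_inst: "prov T (Imp (All A) (inst t A))"
| all_dist: "prov T (Imp (All (Imp A B)) (Imp (All A) (All B)))"
| vac: "prov T (Imp A (All (lift A)))"
| ex_def1: "prov T (Imp (Ex A) (Neg (All (Neg A))))"
| ex_def2: "prov T (Imp (Neg (All (Neg A))) (Ex A))"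
| eq_refl: "prov T (Eq t t)"
| eq_leib: "prov T (Imp (Eq s t) (Imp (inst s A) (inst t A)))"

definition inconsistent :: "('f, 'p) fm set \<Rightarrow> bool" where
  "inconsistent T \<longleftrightarrow> (\<exists>A. prov T A \<and> prov T (Neg A))"

end

theory Submission
  imports Defs
begin


lemma tm_ind[case_names Var Fn]:
  assumes "\<And>n. P (Var n)" "\<And>f ts. (\<And>t. t \<in> set ts \<Longrightarrow> P t) \<Longrightarrow> P (Fn f ts)"
  shows "P t"
  by (rule tm.induct[of P "\<lambda>_. True" "\<lambda>_. True"]) (auto intro: assms)

lemma fm_ind[case_names Atom Eq Neg Conj Disj All Ex]:
  assumes "\<And>p ts. P (Atom p ts)" "\<And>s t. P (Eq s t)" "\<And>A. P A \<Longrightarrow> P (Neg A)"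
    "\<And>A B. P A \<Longrightarrow> P B \<Longrightarrow> P (Conj A B)" "\<And>A B. P A \<Longrightarrow> P B \<Longrightarrow> P (Disj A B)"
    "\<And>A. P A \<Longrightarrow> P (fm.All A)" "\<And>A. P A \<Longrightarrow> P (fm.Ex A)"
  shows "P A"
  by (rule fm.induct[of "\<lambda>_. True" "\<lambda>_. True" P]) (auto intro: assms)

primrec ev :: "(('f,'p) sym \<Rightarrow> 'u list \<Rightarrow> 'u) \<Rightarrow> (nat \<Rightarrow> 'u) \<Rightarrow> ('f,'p) tm \<Rightarrow> 'u" where
  "ev F e (Var n) = e n"
| "ev F e (Fn f ts) = F f (map (ev F e) ts)"

primrec hol :: "'u set \<Rightarrow> (('f,'p) sym \<Rightarrow> 'u list \<Rightarrow> 'u) \<Rightarrow> ('p \<Rightarrow> 'u list \<Rightarrow> bool) \<Rightarrow> (nat \<Rightarrow> 'u) \<Rightarrow> ('f,'p) fm \<Rightarrow> bool" where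
  "hol D F P e (Atom p ts) = P p (map (ev F e) ts)"
| "hol D F P e (Eq s t) = (ev F e s = ev F e t)"
| "hol D F P e (Neg A) = (\<not> hol D F P e A)"
| "hol D F P e (Conj A B) = (hol D F P e A \<and> hol D F P e B)"
| "hol D F P e (Disj A B) = (hol D F P e A \<or> hol D F P e B)"
| "hol D F P e (All A) = (\<forall>d\<in>D. hol D F P (case_nat d e) A)"
| "hol D F P e (Ex A) = (\<exists>d\<in>D. hol D F P (case_nat d e) A)"

lemma ev_subst: "ev F e (subst_tm \<sigma> t) = ev F (\<lambda>n. ev F e (\<sigma> n)) t"
proof (induction t rule: tm_ind)
  case (Fn f ts)
  have "map (ev F e \<circ> subst_tm \<sigma>) ts = map (ev F (\<lambda>n. ev F e (\<sigma> n))) ts"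
    by (intro map_cong) (auto simp: Fn.IH)
  then show ?case by (simp del: map_eq_conv)
qed simp

lemma ev_lift: "ev F (case_nat d e) (lift_tm t) = ev F e t"
  by (simp add: lift_tm_def ev_subst)

lemma env_up: "(\<lambda>n. ev F (case_nat d e) (up \<sigma> n)) = case_nat d (\<lambda>n. ev F e (\<sigma> n))"
  by (rule ext) (simp add: up_def ev_lift split: nat.split)

lemma hol_subst: "hol D F P e (subst \<sigma> A) = hol D F P (\<lambda>n. ev F e (\<sigma> n)) A"
  by (induction A arbitrary: e \<sigma> rule: fm_ind) (auto simp: ev_subst env_up comp_def)

lemma env_scons: "(\<lambda>n. ev F e (scons t Var n)) = case_nat (ev F e t) e"
  by (rule ext) (simp add: scons_def split: nat.split)

lemma hol_inst: "hol D F P e (inst t A) = hol D F P (case_nat (ev F e t) e) A"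
  by (simp add: inst_def hol_subst env_scons)

lemma hol_lift: "hol D F P (case_nat d e) (lift A) = hol D F P e A"
  by (simp add: lift_def hol_subst)

lemma hol_Imp[simp]: "hol D F P e (Imp A B) = (hol D F P e A \<longrightarrow> hol D F P e B)"
  by (simp add: Imp_def)

lemma ev_cong_fv: "(\<And>n. n \<in> fv_tm t \<Longrightarrow> e n = e' n) \<Longrightarrow> ev F e t = ev F e' t"
proof (induction t rule: tm_ind)
  case (Fn f ts)
  then have "map (ev F e) ts = map (ev F e') ts" by (intro map_cong) auto
  then show ?case by (simp del: map_eq_conv)
qed simp

lemma hol_cong_fv: "(\<And>n. n \<in> fv A \<Longrightarrow> e n = e' n) \<Longrightarrow> hol D F Pr e A = hol D F Pr e' A"
proof (induction A arbitrary: e e' rule: fm_ind)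
  case (Atom p ts)
  have "map (ev F e) ts = map (ev F e') ts"
  proof (rule map_cong[OF refl])
    fix t assume "t \<in> set ts"
    then show "ev F e t = ev F e' t" using Atom.prems by (intro ev_cong_fv) auto
  qed
  then show ?case by (simp del: map_eq_conv)
next
  case (Eq s t)
  have "ev F e s = ev F e' s" "ev F e t = ev F e' t"
    using Eq.prems by (intro ev_cong_fv; simp)+
  then show ?case by simp
next
  case (All A)
  have "\<And>d. hol D F Pr (case_nat d e) A = hol D F Pr (case_nat d e') A"
  proof (rule All.IH)
    fix d n assume "n \<in> fv A"
    then show "case_nat d e n = case_nat d e' n" using All.prems by (cases n) auto
  qed
  then show ?case by simp
next
  case (Ex A)
  have "\<And>d. hol D F Pr (case_nat d e) A = hol D F Pr (case_nat d e') A"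
  proof (rule Ex.IH)
    fix d n assume "n \<in> fv A"
    then show "case_nat d e n = case_nat d e' n" using Ex.prems by (cases n) auto
  qed
  then show ?case by simp
next
  case (Neg A)
  have "hol D F Pr e A = hol D F Pr e' A" by (rule Neg.IH) (rule Neg.prems, simp)
  then show ?case by simp
next
  case (Conj A B)
  have "hol D F Pr e A = hol D F Pr e' A" by (rule Conj.IH) (rule Conj.prems, simp)
  moreover have "hol D F Pr e B = hol D F Pr e' B" by (rule Conj.IH) (rule Conj.prems, simp)
  ultimately show ?case by simp
next
  case (Disj A B)
  have "hol D F Pr e A = hol D F Pr e' A" by (rule Disj.IH) (rule Disj.prems, simp)
  moreover have "hol D F Pr e B = hol D F Pr e' B" by (rule Disj.IH) (rule Disj.prems, simp)
  ultimately show ?case by simp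
qed

lemma peval_hol: "peval (hol D F P e) A = hol D F P e A"
  by (induction A rule: fm_ind) auto

definition struct :: "'u set \<Rightarrow> (('f,'p) sym \<Rightarrow> 'u list \<Rightarrow> 'u) \<Rightarrow> bool" where
  "struct D F \<longleftrightarrow> D \<noteq> {} \<and> (\<forall>f xs. set xs \<subseteq> D \<longrightarrow> F f xs \<in> D)"

definition models :: "'u set \<Rightarrow> (('f,'p) sym \<Rightarrow> 'u list \<Rightarrow> 'u) \<Rightarrow> ('p \<Rightarrow> 'u list \<Rightarrow> bool) \<Rightarrow> ('f,'p) fm \<Rightarrow> bool" where
  "models D F P A \<longleftrightarrow> (\<forall>e. range e \<subseteq> D \<longrightarrow> hol D F P e A)"

lemma ev_in: "struct D F \<Longrightarrow> range e \<subseteq> D \<Longrightarrow> ev F e t \<in> D"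
proof (induction t rule: tm_ind)
  case (Fn f ts)
  then have "set (map (ev F e) ts) \<subseteq> D" by auto
  then show ?case using Fn.prems by (simp add: struct_def)
qed auto

lemma range_case_nat: "range e \<subseteq> D \<Longrightarrow> d \<in> D \<Longrightarrow> range (case_nat d e) \<subseteq> D"
  by (fastforce split: nat.split)

lemma soundness:
  assumes "prov T A" "struct D F" "\<forall>B\<in>T. models D F P B"
  shows "models D F P A"
  using assms(1)
proof induction
  case (hyp A) then show ?case using assms by auto
next
  case (taut A) then show ?case by (auto simp: models_def tautology_def peval_hol[symmetric])
next
  case (mp A B) then show ?case by (auto simp: models_def)
next
  case (gen A) then show ?case by (auto simp: models_def range_case_nat[simplified])
next
  case (all_inst A t) then show ?case using assms(2) by (auto simp: models_def hol_inst ev_in)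
next
  case (all_dist A B) then show ?case by (auto simp: models_def)
next
  case (vac A) then show ?case by (auto simp: models_def hol_lift struct_def)
next
  case (ex_def1 A) then show ?case by (auto simp: models_def)
next
  case (ex_def2 A) then show ?case by (auto simp: models_def)
next
  case (eq_refl t) then show ?case by (auto simp: models_def)
next
  case (eq_leib s t A) then show ?case by (auto simp: models_def hol_inst)
qed

lemma sound_consistent:
  assumes "struct D F" "\<forall>B\<in>T. models D F P B"
  shows "\<not> inconsistent T"
proof
  assume "inconsistent T"
  then obtain A where "prov T A" "prov T (Neg A)" by (auto simp: inconsistent_def)
  then have "models D F P A" "models D F P (Neg A)" using soundness assms by blast+
  moreover obtain d where "d \<in> D" using assms(1) by (auto simp: struct_def)
  ultimately show False by (auto simp: models_def dest: spec[of _ "\<lambda>_. d"])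
qed


lemma finite_fv_tm[simp]: "finite (fv_tm t)"
  by (induction t rule: tm_ind) auto

lemma finite_Suc_pre: "finite S \<Longrightarrow> finite {n. Suc n \<in> S}"
  by (rule finite_subset[of _ "(\<lambda>n. n - 1) ` S"]) (auto intro: image_eqI[where x="Suc _"])

lemma finite_fv[simp]: "finite (fv A)"
  by (induction A rule: fm_ind) (auto intro: finite_Suc_pre)

primrec gsub_tm :: "('f,'p) sym \<Rightarrow> (nat \<Rightarrow> ('f,'p) tm) \<Rightarrow> ('f,'p) tm \<Rightarrow> ('f,'p) tm \<Rightarrow> ('f,'p) tm" where
  "gsub_tm c \<sigma> u (Var n) = \<sigma> n"
| "gsub_tm c \<sigma> u (Fn f ts) = (if f = c \<and> ts = [] then u else Fn f (map (gsub_tm c \<sigma> u) ts))"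

primrec gsub :: "('f,'p) sym \<Rightarrow> (nat \<Rightarrow> ('f,'p) tm) \<Rightarrow> ('f,'p) tm \<Rightarrow> ('f,'p) fm \<Rightarrow> ('f,'p) fm" where
  "gsub c \<sigma> u (Atom p ts) = Atom p (map (gsub_tm c \<sigma> u) ts)"
| "gsub c \<sigma> u (Eq s t) = Eq (gsub_tm c \<sigma> u s) (gsub_tm c \<sigma> u t)"
| "gsub c \<sigma> u (Neg A) = Neg (gsub c \<sigma> u A)"
| "gsub c \<sigma> u (Conj A B) = Conj (gsub c \<sigma> u A) (gsub c \<sigma> u B)"
| "gsub c \<sigma> u (Disj A B) = Disj (gsub c \<sigma> u A) (gsub c \<sigma> u B)"
| "gsub c \<sigma> u (fm.All A) = fm.All (gsub c (up \<sigma>) (lift_tm u) A)"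
| "gsub c \<sigma> u (fm.Ex A) = fm.Ex (gsub c (up \<sigma>) (lift_tm u) A)"

lemma gsub_tm_triv: "gsub_tm c \<sigma> (Fn c []) t = subst_tm \<sigma> t"
  by (induction t rule: tm_ind) auto

lemma lift_tm_const[simp]: "lift_tm (Fn c []) = Fn c []"
  by (simp add: lift_tm_def)

lemma gsub_triv: "gsub c \<sigma> (Fn c []) A = subst \<sigma> A"
  by (induction A arbitrary: \<sigma> rule: fm_ind) (auto simp: gsub_tm_triv)

lemma gsub_tm_comp:
  "gsub_tm c \<sigma> u (gsub_tm c \<tau> w t) = gsub_tm c (\<lambda>n. gsub_tm c \<sigma> u (\<tau> n)) (gsub_tm c \<sigma> u w) t"
  by (induction t rule: tm_ind) auto

lemma lift_tm_as_gsub: "lift_tm t = gsub_tm c (\<lambda>n. Var (Suc n)) (Fn c []) t"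
  by (simp add: lift_tm_def gsub_tm_triv)

lemma gsub_up_lift:
  "gsub_tm c (up \<sigma>) (lift_tm u) (lift_tm t) = lift_tm (gsub_tm c \<sigma> u t)"
proof -
  have "gsub_tm c (up \<sigma>) (lift_tm u) (lift_tm t)
      = gsub_tm c (\<lambda>n. gsub_tm c (up \<sigma>) (lift_tm u) (Var (Suc n))) (gsub_tm c (up \<sigma>) (lift_tm u) (Fn c [])) t"
    by (simp only: lift_tm_as_gsub[of t c] gsub_tm_comp)
  also have "\<dots> = gsub_tm c (\<lambda>n. lift_tm (\<sigma> n)) (lift_tm u) t"
    by (simp add: up_def)
  also have "\<dots> = lift_tm (gsub_tm c \<sigma> u t)"
    by (simp only: lift_tm_as_gsub[of _ c] gsub_tm_comp)
  finally show ?thesis .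
qed

lemma up_comp: "(\<lambda>n. gsub_tm c (up \<sigma>) (lift_tm u) (up \<tau> n)) = up (\<lambda>n. gsub_tm c \<sigma> u (\<tau> n))"
  by (rule ext) (simp add: up_def gsub_up_lift split: nat.split)

lemma gsub_comp:
  "gsub c \<sigma> u (gsub c \<tau> w A) = gsub c (\<lambda>n. gsub_tm c \<sigma> u (\<tau> n)) (gsub_tm c \<sigma> u w) A"
  by (induction A arbitrary: \<sigma> \<tau> u w rule: fm_ind) (auto simp: gsub_tm_comp up_comp gsub_up_lift)

lemma subst_tm_comp: "subst_tm \<sigma> (subst_tm \<tau> t) = subst_tm (\<lambda>n. subst_tm \<sigma> (\<tau> n)) t"
  using gsub_tm_comp[of undefined \<sigma> "Fn undefined []" \<tau> "Fn undefined []" t]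
  by (simp add: gsub_tm_triv)

lemma subst_comp: "subst \<sigma> (subst \<tau> A) = subst (\<lambda>n. subst_tm \<sigma> (\<tau> n)) A"
  using gsub_comp[of undefined \<sigma> "Fn undefined []" \<tau> "Fn undefined []" A]
  by (simp add: gsub_triv gsub_tm_triv)

lemma gsub_tm_id: "(\<And>n. n \<in> fv_tm t \<Longrightarrow> \<sigma> n = Var n) \<Longrightarrow> FS c 0 \<notin> syms_tm t \<Longrightarrow> gsub_tm c \<sigma> u t = t"
proof (induction t rule: tm_ind)
  case (Fn f ts)
  have "map (gsub_tm c \<sigma> u) ts = ts" by (rule map_idI, rule Fn.IH) (use Fn.prems in auto)
  then show ?case using Fn.prems(2) by auto
qed simp

lemma up_id: "(\<And>n. n \<in> fv (fm.All A) \<Longrightarrow> \<sigma> n = Var n) \<Longrightarrow> n \<in> fv A \<Longrightarrow> up \<sigma> n = Var n"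
  by (auto simp: up_def lift_tm_def split: nat.split)

lemma gsub_id: "(\<And>n. n \<in> fv A \<Longrightarrow> \<sigma> n = Var n) \<Longrightarrow> FS c 0 \<notin> syms A \<Longrightarrow> gsub c \<sigma> u A = A"
proof (induction A arbitrary: \<sigma> u rule: fm_ind)
  case (Atom p ts)
  have "map (gsub_tm c \<sigma> u) ts = ts" by (rule map_idI, rule gsub_tm_id) (use Atom.prems in auto)
  then show ?case by simp
next
  case (Eq s t) then show ?case using gsub_tm_id by (metis Un_iff fv.simps(2) gsub.simps(2) syms.simps(2))
next
  case (Neg A) then show ?case by simp
next
  case (Conj A B) then show ?case by simp
next
  case (Disj A B) then show ?case by simp
next
  case (All A)
  have "gsub c (up \<sigma>) (lift_tm u) A = A"
    by (rule All.IH) (use All.prems up_id in auto)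
  then show ?case by simp
next
  case (Ex A)
  have "up \<sigma> n = Var n" if "n \<in> fv A" for n
    using Ex.prems that by (auto simp: up_def lift_tm_def split: nat.split)
  then have "gsub c (up \<sigma>) (lift_tm u) A = A"
    using Ex.IH Ex.prems by auto
  then show ?case by simp
qed

lemma subst_tm_id: "(\<And>n. n \<in> fv_tm t \<Longrightarrow> \<sigma> n = Var n) \<Longrightarrow> subst_tm \<sigma> t = t"
proof (induction t rule: tm_ind)
  case (Fn f ts)
  have "map (subst_tm \<sigma>) ts = ts" by (rule map_idI, rule Fn.IH) (use Fn.prems in auto)
  then show ?case by simp
qed simp

lemma subst_id: "(\<And>n. n \<in> fv A \<Longrightarrow> \<sigma> n = Var n) \<Longrightarrow> subst \<sigma> A = A"
proof (induction A arbitrary: \<sigma> rule: fm_ind)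
  case (Atom p ts)
  have "map (subst_tm \<sigma>) ts = ts" by (rule map_idI, rule subst_tm_id) (use Atom.prems in auto)
  then show ?case by simp
next
  case (Eq s t) then show ?case using subst_tm_id by (metis Un_iff fv.simps(2) subst.simps(2))
next
  case (Neg A) then show ?case by simp
next
  case (Conj A B) then show ?case by simp
next
  case (Disj A B) then show ?case by simp
next
  case (All A)
  have "subst (up \<sigma>) A = A"
    by (rule All.IH) (use All.prems up_id in auto)
  then show ?case by simp
next
  case (Ex A)
  have "up \<sigma> n = Var n" if "n \<in> fv A" for n
    using Ex.prems that by (auto simp: up_def lift_tm_def split: nat.split)
  then have "subst (up \<sigma>) A = A"
    using Ex.IH Ex.prems by auto
  then show ?case by simp
qed

lemma fv_tm_subst: "fv_tm (subst_tm \<sigma> t) = (\<Union>n\<in>fv_tm t. fv_tm (\<sigma> n))"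
  by (induction t rule: tm_ind) auto

lemma fv_tm_lift: "fv_tm (lift_tm t) = Suc ` fv_tm t"
  by (auto simp: lift_tm_def fv_tm_subst)

lemma Suc_fv_up: "Suc n \<in> fv_tm (up \<sigma> m) \<longleftrightarrow> (\<exists>k. m = Suc k \<and> n \<in> fv_tm (\<sigma> k))"
  by (cases m) (auto simp: up_def fv_tm_lift)

lemma fv_subst: "fv (subst \<sigma> A) = (\<Union>n\<in>fv A. fv_tm (\<sigma> n))"
proof (induction A arbitrary: \<sigma> rule: fm_ind)
  case (All A)
  show ?case by (auto simp: All.IH Suc_fv_up)
next
  case (Ex A)
  show ?case by (auto simp: Ex.IH Suc_fv_up)
qed (auto simp: fv_tm_subst)

lemma syms_tm_subst: "syms_tm (subst_tm \<sigma> t) = syms_tm t \<union> (\<Union>n\<in>fv_tm t. syms_tm (\<sigma> n))"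
  by (induction t rule: tm_ind) auto

lemma syms_tm_lift[simp]: "syms_tm (lift_tm t) = syms_tm t"
  by (auto simp: lift_tm_def syms_tm_subst)

lemma syms_up: "syms_tm (up \<sigma> m) = (case m of 0 \<Rightarrow> {} | Suc k \<Rightarrow> syms_tm (\<sigma> k))"
  by (cases m) (auto simp: up_def)

lemma syms_subst: "syms (subst \<sigma> A) = syms A \<union> (\<Union>n\<in>fv A. syms_tm (\<sigma> n))"
proof (induction A arbitrary: \<sigma> rule: fm_ind)
  case (All A)
  show ?case
    apply (simp add: All.IH syms_up)
    apply (auto split: nat.splits)
    done
next
  case (Ex A)
  show ?case
    apply (simp add: Ex.IH syms_up)
    apply (auto split: nat.splits)
    done
qed (auto simp: syms_tm_subst)

lemma fv_inst: "fv (inst t A) = (if 0 \<in> fv A then fv_tm t else {}) \<union> {n. Suc n \<in> fv A}"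
  by (auto simp: inst_def fv_subst scons_def split: nat.splits)

lemma syms_inst: "syms (inst t A) = syms A \<union> (if 0 \<in> fv A then syms_tm t else {})"
  by (auto simp: inst_def syms_subst scons_def split: nat.splits)

lemma fv_lift: "fv (lift A) = Suc ` fv A"
  by (auto simp: lift_def fv_subst)

lemma lift_closed: "fv A = {} \<Longrightarrow> lift A = A"
  unfolding lift_def by (rule subst_id) simp

lemma subst_tm_lift_scons: "subst_tm (scons t Var) (lift_tm w) = w"
  by (simp add: lift_tm_def subst_tm_comp scons_def subst_tm_id)

lemma gsub_inst:
  "gsub c \<sigma> u (inst t A) = inst (gsub_tm c \<sigma> u t) (gsub c (up \<sigma>) (lift_tm u) A)"
proof -
  have "gsub c \<sigma> u (inst t A) = gsub c (\<lambda>n. gsub_tm c \<sigma> u (scons t Var n)) u A"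
    by (simp only: inst_def gsub_triv[of c, symmetric] gsub_comp) simp
  also have "\<dots> = gsub c (\<lambda>n. gsub_tm c (scons (gsub_tm c \<sigma> u t) Var) (Fn c []) (up \<sigma> n))
        (gsub_tm c (scons (gsub_tm c \<sigma> u t) Var) (Fn c []) (lift_tm u)) A"
    by (rule arg_cong2[where f="\<lambda>a b. gsub c a b A"])
       (auto simp: gsub_tm_triv subst_tm_lift_scons scons_def up_def split: nat.split)
  also have "\<dots> = inst (gsub_tm c \<sigma> u t) (gsub c (up \<sigma>) (lift_tm u) A)"
    by (simp only: inst_def gsub_triv[of c, symmetric] gsub_comp)
  finally show ?thesis .
qed

lemma gsub_lift: "gsub c (up \<sigma>) (lift_tm u) (lift A) = lift (gsub c \<sigma> u A)"
  apply (simp only: lift_def gsub_triv[of c, symmetric] gsub_comp)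
  apply (simp add: up_def lift_tm_as_gsub[symmetric])
  done

lemma gsub_Imp[simp]: "gsub c \<sigma> u (Imp A B) = Imp (gsub c \<sigma> u A) (gsub c \<sigma> u B)"
  by (simp add: Imp_def)

lemma peval_gsub: "peval v (gsub c \<sigma> u A) = peval (\<lambda>B. v (gsub c \<sigma> u B)) A"
  by (induction A rule: fm_ind) auto

lemma prov_gsub:
  assumes "\<And>B \<sigma> u'. B \<in> T \<Longrightarrow> u' \<in> U \<Longrightarrow> gsub c \<sigma> u' B = B"
    and "\<And>u'. u' \<in> U \<Longrightarrow> lift_tm u' \<in> U"
  shows "prov T A \<Longrightarrow> u \<in> U \<Longrightarrow> prov T (gsub c \<sigma> u A)"
proof (induction arbitrary: \<sigma> u rule: prov.induct)
  case (hyp A) then show ?case using assms(1) prov.hyp by metis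
next
  case (taut A) then show ?case by (auto intro!: prov.taut simp: tautology_def peval_gsub)
next
  case (mp A B) then show ?case by (metis gsub_Imp prov.mp)
next
  case (gen A) then show ?case by (simp add: assms(2) prov.gen)
next
  case (all_inst A t) then show ?case by (simp add: gsub_inst prov.all_inst)
next
  case (all_dist A B) then show ?case by (simp add: prov.all_dist)
next
  case (vac A) then show ?case by (simp add: gsub_lift prov.vac)
next
  case (ex_def1 A) then show ?case by (simp add: prov.ex_def1)
next
  case (ex_def2 A) then show ?case by (simp add: prov.ex_def2)
next
  case (eq_refl t) then show ?case by (simp add: prov.eq_refl)
next
  case (eq_leib s t A) then show ?case by (simp add: gsub_inst prov.eq_leib)
qed

definition closed_set :: "('f,'p) fm set \<Rightarrow> bool" where
  "closed_set T \<longleftrightarrow> (\<forall>B\<in>T. fv B = {})"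

lemma prov_subst:
  assumes "closed_set T" "prov T A"
  shows "prov T (subst \<sigma> A)"
proof -
  have "prov T (gsub undefined \<sigma> (Fn undefined []) A)"
    by (rule prov_gsub[where U="{Fn undefined []}"])
       (use assms in \<open>auto simp: gsub_triv closed_set_def intro: subst_id\<close>)
  then show ?thesis by (simp add: gsub_triv)
qed

lemma prov_const:
  assumes "closed_set T" "\<forall>B\<in>T. FS c 0 \<notin> syms B" "prov T A"
  shows "prov T (gsub c \<sigma> u A)"
  by (rule prov_gsub[where U=UNIV]) (use assms in \<open>auto simp: closed_set_def intro: gsub_id\<close>)


lemma prov_mono: "prov T A \<Longrightarrow> T \<subseteq> T' \<Longrightarrow> prov T' A"
proof (induction rule: prov.induct)
  case (hyp A) then show ?case by (auto intro: prov.hyp)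
qed (auto intro: prov.intros)

lemma prov_compact: "prov T A \<Longrightarrow> \<exists>T0\<subseteq>T. finite T0 \<and> prov T0 A"
proof (induction rule: prov.induct)
  case (hyp A) then show ?case by (intro exI[of _ "{A}"]) (auto intro: prov.hyp)
next
  case (mp A B)
  then obtain T1 T2 where "T1 \<subseteq> T" "finite T1" "prov T1 (Imp A B)" "T2 \<subseteq> T" "finite T2" "prov T2 A"
    by blast
  then show ?case
    by (intro exI[of _ "T1 \<union> T2"]) (auto intro: prov.mp prov_mono)
next
  case (gen A) then show ?case by (auto intro: prov.gen)
qed (auto intro: prov.intros)

lemma prov_taut1: "prov T A \<Longrightarrow> tautology (Imp A B) \<Longrightarrow> prov T B"
  by (meson prov.mp prov.taut)

lemma prov_taut2: "prov T A \<Longrightarrow> prov T B \<Longrightarrow> tautology (Imp A (Imp B C)) \<Longrightarrow> prov T C"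
  by (meson prov.mp prov.taut)

lemma incons_all: "inconsistent T \<Longrightarrow> prov T A"
  unfolding inconsistent_def
  by (auto intro: prov_taut2 simp: tautology_def Imp_def)

lemma deduction:
  assumes "fv B = {}"
  shows "prov (insert B T) C \<Longrightarrow> prov T (Imp B C)"
proof (induction rule: prov.induct)
  case (hyp A)
  then show ?case
  proof
    assume "A = B" then show ?thesis by (auto intro!: prov.taut simp: tautology_def Imp_def)
  next
    assume "A \<in> T" then show ?thesis
      by (auto intro: prov_taut1 prov.hyp simp: tautology_def Imp_def)
  qed
next
  case (taut A) then show ?case by (auto intro: prov_taut1 prov.taut simp: tautology_def Imp_def)
next
  case (mp A C)
  then show ?case by (auto intro: prov_taut2 simp: tautology_def Imp_def)
next
  case (gen A)
  have "prov T (Imp (fm.All (Imp B A)) (Imp (fm.All B) (fm.All A)))" by (rule prov.all_dist)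
  moreover have "prov T (fm.All (Imp B A))" using gen.IH by (rule prov.gen)
  ultimately have "prov T (Imp (fm.All B) (fm.All A))" by (rule prov.mp)
  moreover have "prov T (Imp B (fm.All B))" using prov.vac[of T B] by (simp add: lift_closed assms)
  ultimately show ?case by (auto intro: prov_taut2 simp: tautology_def Imp_def)
qed (auto intro: prov_taut1 prov.intros simp: tautology_def Imp_def)

lemma incons_insert: "fv B = {} \<Longrightarrow> inconsistent (insert B T) \<Longrightarrow> prov T (Neg B)"
proof -
  assume a: "fv B = {}" "inconsistent (insert B T)"
  have "prov T (Imp B (Neg B))" using a by (intro deduction incons_all)
  then show ?thesis by (rule prov_taut1) (simp add: tautology_def Imp_def)
qed

lemma prov_incons: "prov T A \<Longrightarrow> prov T (Neg A) \<Longrightarrow> inconsistent T"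
  by (auto simp: inconsistent_def)

definition ClK :: "('f,'p) lsym set \<Rightarrow> ('f,'p) fm set" where
  "ClK K = {A. fv A = {} \<and> syms A \<subseteq> K}"

definition CT :: "('f,'p) lsym set \<Rightarrow> ('f,'p) tm set" where
  "CT K = {t. fv_tm t = {} \<and> syms_tm t \<subseteq> K}"

definition maxcons :: "('f,'p) lsym set \<Rightarrow> ('f,'p) fm set \<Rightarrow> bool" where
  "maxcons K M \<longleftrightarrow> M \<subseteq> ClK K \<and> \<not> inconsistent M \<and>
     (\<forall>A\<in>ClK K. \<not> inconsistent (insert A M) \<longrightarrow> A \<in> M)"

lemma incons_mono: "inconsistent T \<Longrightarrow> T \<subseteq> T' \<Longrightarrow> inconsistent T'"
  by (auto simp: inconsistent_def intro: prov_mono)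

lemma incons_compact: "inconsistent T \<Longrightarrow> \<exists>T0\<subseteq>T. finite T0 \<and> inconsistent T0"
proof -
  assume "inconsistent T"
  then obtain A where "prov T A" "prov T (Neg A)" by (auto simp: inconsistent_def)
  then obtain T1 T2 where "T1 \<subseteq> T" "finite T1" "prov T1 A" "T2 \<subseteq> T" "finite T2" "prov T2 (Neg A)"
    using prov_compact by metis
  then show ?thesis
    by (intro exI[of _ "T1 \<union> T2"]) (auto simp: inconsistent_def intro: prov_mono)
qed

lemma max_exists:
  assumes "S \<subseteq> ClK K" "\<not> inconsistent S"
  shows "\<exists>M. S \<subseteq> M \<and> maxcons K M"
proof -
  let ?A = "{X. S \<subseteq> X \<and> X \<subseteq> ClK K \<and> \<not> inconsistent X}"
  have ch: "\<exists>U\<in>?A. \<forall>X\<in>C. X \<subseteq> U" if C: "C \<in> chains ?A" for C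
  proof (cases "C = {}")
    case True then show ?thesis using assms by auto
  next
    case False
    have "\<not> inconsistent (\<Union>C)"
    proof
      assume "inconsistent (\<Union>C)"
      then obtain T0 where "T0 \<subseteq> \<Union>C" "finite T0" "inconsistent T0" using incons_compact by metis
      moreover have "subset.chain ?A C" using C by (simp add: chains_alt_def)
      ultimately obtain B where "B \<in> C" "T0 \<subseteq> B"
        using False finite_subset_Union_chain[of T0 C ?A] by blast
      then have "inconsistent B" using \<open>inconsistent T0\<close> incons_mono by blast
      moreover have "B \<in> ?A" using \<open>B \<in> C\<close> C unfolding chains_def by blast
      ultimately show False by blast
    qed
    moreover have "S \<subseteq> \<Union>C" using C False unfolding chains_def by blast
    moreover have "\<Union>C \<subseteq> ClK K" using C unfolding chains_def by blast
    ultimately have "\<Union>C \<in> ?A" by blast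
    then show ?thesis by blast
  qed
  have "\<forall>C\<in>chains ?A. \<exists>U\<in>?A. \<forall>X\<in>C. X \<subseteq> U" using ch by (rule ballI)
  from Zorn_Lemma2[OF this] obtain M where M: "M \<in> ?A" "\<forall>X\<in>?A. M \<subseteq> X \<longrightarrow> X = M"
    by (elim bexE) (rule that)
  have "maxcons K M"
    unfolding maxcons_def
  proof (intro conjI ballI impI)
    show "M \<subseteq> ClK K" using M(1) by blast
    show "\<not> inconsistent M" using M(1) by blast
    fix A assume "A \<in> ClK K" "\<not> inconsistent (insert A M)"
    then have "insert A M \<in> ?A" using M(1) by blast
    then have "insert A M = M" using M(2) by blast
    then show "A \<in> M" by blast
  qed
  then show ?thesis using M(1) by blast
qed

locale mc =
  fixes K :: "('f,'p) lsym set" and M :: "('f,'p) fm set"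
  assumes mc: "maxcons K M"
begin

lemma M_sub: "M \<subseteq> ClK K" and M_cons: "\<not> inconsistent M"
  using mc by (auto simp: maxcons_def)

lemma M_closed: "A \<in> M \<Longrightarrow> fv A = {}"
  using M_sub by (auto simp: ClK_def)

lemma prov_in: "prov M A \<Longrightarrow> A \<in> ClK K \<Longrightarrow> A \<in> M"
proof (rule ccontr)
  assume a: "prov M A" "A \<in> ClK K" "A \<notin> M"
  then have "inconsistent (insert A M)" using mc by (auto simp: maxcons_def)
  then have "prov M (Neg A)" using a by (intro incons_insert) (auto simp: ClK_def)
  then show False using a M_cons prov_incons by blast
qed

lemma neg_in: "A \<in> ClK K \<Longrightarrow> Neg A \<in> M \<longleftrightarrow> A \<notin> M"
proof
  assume "A \<in> ClK K" "Neg A \<in> M"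
  then show "A \<notin> M" using M_cons prov_incons prov.hyp by blast
next
  assume a: "A \<in> ClK K" "A \<notin> M"
  then have "inconsistent (insert A M)" using mc by (auto simp: maxcons_def)
  then have "prov M (Neg A)" using a by (intro incons_insert) (auto simp: ClK_def)
  then show "Neg A \<in> M" using a by (intro prov_in) (auto simp: ClK_def)
qed

lemma conj_in: "Conj A B \<in> ClK K \<Longrightarrow> Conj A B \<in> M \<longleftrightarrow> A \<in> M \<and> B \<in> M"
proof
  assume a: "Conj A B \<in> ClK K" "Conj A B \<in> M"
  have "prov M A" "prov M B" using a(2)
    by (auto intro: prov_taut1 prov.hyp simp: tautology_def Imp_def)
  then show "A \<in> M \<and> B \<in> M" using a(1) by (auto intro!: prov_in simp: ClK_def)
next
  assume a: "Conj A B \<in> ClK K" "A \<in> M \<and> B \<in> M"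
  then have "prov M (Conj A B)"
    by (auto intro: prov_taut2 prov.hyp simp: tautology_def Imp_def)
  then show "Conj A B \<in> M" using a(1) by (rule prov_in)
qed

lemma disj_in: "Disj A B \<in> ClK K \<Longrightarrow> Disj A B \<in> M \<longleftrightarrow> A \<in> M \<or> B \<in> M"
proof
  assume a: "Disj A B \<in> ClK K" "Disj A B \<in> M"
  show "A \<in> M \<or> B \<in> M"
  proof (rule ccontr)
    assume "\<not> (A \<in> M \<or> B \<in> M)"
    then have "Neg A \<in> M" "Neg B \<in> M" using a(1) neg_in by (auto simp: ClK_def)
    then have "prov M (Neg (Disj A B))"
      by (auto intro: prov_taut2 prov.hyp simp: tautology_def Imp_def)
    then show False using a(2) M_cons prov_incons prov.hyp by blast
  qed
next
  assume a: "Disj A B \<in> ClK K" "A \<in> M \<or> B \<in> M"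
  then have "prov M (Disj A B)"
    by (auto intro: prov_taut1 prov.hyp simp: tautology_def Imp_def)
  then show "Disj A B \<in> M" using a(1) by (rule prov_in)
qed

lemma inst_ClK: "fm.All A \<in> ClK K \<or> fm.Ex A \<in> ClK K \<Longrightarrow> t \<in> CT K \<Longrightarrow> inst t A \<in> ClK K"
  by (auto simp: ClK_def CT_def fv_inst syms_inst split: if_splits)

lemma all_in: "fm.All A \<in> M \<Longrightarrow> t \<in> CT K \<Longrightarrow> inst t A \<in> M"
  using M_sub by (auto intro!: prov_in inst_ClK intro: prov.mp[OF prov.all_inst] prov.hyp)

lemma inst_Neg: "inst t (Neg A) = Neg (inst t A)"
  by (simp add: inst_def)

lemma nex_in: "Neg (fm.Ex A) \<in> M \<Longrightarrow> t \<in> CT K \<Longrightarrow> inst t A \<notin> M"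
proof -
  assume a: "Neg (fm.Ex A) \<in> M" "t \<in> CT K"
  have "prov M (Imp (Neg (fm.All (Neg A))) (fm.Ex A))" by (rule prov.ex_def2)
  then have "prov M (fm.All (Neg A))" using a(1)
    by (auto intro: prov_taut2 prov.hyp simp: tautology_def Imp_def)
  then have "prov M (Neg (inst t A))" using prov.mp[OF prov.all_inst] by (metis inst_Neg)
  moreover have "Neg (fm.Ex A) \<in> ClK K" using a(1) M_sub by blast
  then have "fm.Ex A \<in> ClK K" by (simp add: ClK_def)
  moreover have "inst t A \<in> ClK K" using calculation(2) a(2) by (intro inst_ClK) auto
  moreover have "Neg (inst t A) \<in> ClK K" using calculation(3) by (simp add: ClK_def)
  ultimately show ?thesis using neg_in prov_in by blast
qed

end


fun uni :: "bool \<Rightarrow> ('f,'p) fm \<Rightarrow> bool" where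
  "uni p (Atom q ts) = True"
| "uni p (Eq s t) = True"
| "uni p (Neg A) = uni (\<not> p) A"
| "uni p (Conj A B) = (uni p A \<and> uni p B)"
| "uni p (Disj A B) = (uni p A \<and> uni p B)"
| "uni p (fm.All A) = (p \<and> uni p A)"
| "uni p (fm.Ex A) = (\<not> p \<and> uni p A)"

lemma uni_subst: "uni p (subst \<sigma> A) = uni p A"
  by (induction A arbitrary: p \<sigma> rule: fm_ind) auto

lemma uni_inst: "uni p (inst t A) = uni p A"
  by (simp add: inst_def uni_subst)

lemma CT_subst: "t \<in> CT K \<Longrightarrow> subst_tm \<sigma> t = t"
  by (auto simp: CT_def intro: subst_tm_id)

lemma inst_Eq: "inst u (Eq a b) = Eq (subst_tm (scons u Var) a) (subst_tm (scons u Var) b)"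
  by (simp add: inst_def)

lemma inst_Atom: "inst u (Atom p ts) = Atom p (map (subst_tm (scons u Var)) ts)"
  by (simp add: inst_def)

lemma scons_0[simp]: "scons u \<sigma> 0 = u" and scons_Suc[simp]: "scons u \<sigma> (Suc n) = \<sigma> n"
  by (simp_all add: scons_def)

lemma map_CT_subst: "set ts \<subseteq> CT K \<Longrightarrow> map (subst_tm \<sigma>) ts = ts"
  by (auto intro: map_idI CT_subst)

lemma CT_Fn: "Fn f ts \<in> CT K \<longleftrightarrow> FS f (length ts) \<in> K \<and> set ts \<subseteq> CT K"
  by (auto simp: CT_def)

lemma ClK_Eq: "Eq s t \<in> ClK K \<longleftrightarrow> s \<in> CT K \<and> t \<in> CT K"
  by (auto simp: CT_def ClK_def)

lemma ClK_Atom: "Atom p ts \<in> ClK K \<longleftrightarrow> PS p (length ts) \<in> K \<and> set ts \<subseteq> CT K"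
  by (auto simp: CT_def ClK_def)

context mc
begin

lemma leib: "Eq s t \<in> M \<Longrightarrow> inst s A \<in> M \<Longrightarrow> inst t A \<in> ClK K \<Longrightarrow> inst t A \<in> M"
  by (rule prov_in) (auto intro: prov.mp[OF prov.mp[OF prov.eq_leib]] prov.hyp)

lemma eq_refl_in: "t \<in> CT K \<Longrightarrow> Eq t t \<in> M"
  by (rule prov_in) (auto intro: prov.eq_refl simp: ClK_Eq)

lemma eq_sym_in: "Eq s t \<in> M \<Longrightarrow> Eq t s \<in> M"
proof -
  assume a: "Eq s t \<in> M"
  then have st: "s \<in> CT K" "t \<in> CT K" using M_sub ClK_Eq by blast+
  have "inst t (Eq (Var 0) s) \<in> M"
    by (rule leib[OF a]) (use st in \<open>auto simp: inst_Eq CT_subst ClK_Eq intro: eq_refl_in\<close>)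
  then show ?thesis using st by (simp add: inst_Eq CT_subst)
qed

lemma eq_trans_in: "Eq s t \<in> M \<Longrightarrow> Eq t u \<in> M \<Longrightarrow> Eq s u \<in> M"
proof -
  assume a: "Eq s t \<in> M" "Eq t u \<in> M"
  then have st: "s \<in> CT K" "t \<in> CT K" "u \<in> CT K" using M_sub ClK_Eq by blast+
  have "inst s (Eq (Var 0) u) \<in> M"
    by (rule leib[OF eq_sym_in[OF a(1)]]) (use st a in \<open>auto simp: inst_Eq CT_subst ClK_Eq\<close>)
  then show ?thesis using st by (simp add: inst_Eq CT_subst)
qed

lemma fn_cong1:
  assumes "Eq a b \<in> M" "Fn f (ps @ a # qs) \<in> CT K"
  shows "Eq (Fn f (ps @ a # qs)) (Fn f (ps @ b # qs)) \<in> M"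
proof -
  have ab: "a \<in> CT K" "b \<in> CT K" using assms(1) M_sub ClK_Eq by blast+
  have pq: "set ps \<subseteq> CT K" "set qs \<subseteq> CT K" using assms(2) by (auto simp: CT_Fn)
  let ?X = "Fn f (ps @ a # qs)"
  have "inst b (Eq ?X (Fn f (ps @ Var 0 # qs))) \<in> M"
    by (rule leib[OF assms(1)])
       (use assms ab pq in \<open>auto simp: inst_Eq CT_subst map_CT_subst ClK_Eq CT_Fn intro: eq_refl_in\<close>)
  then show ?thesis using assms ab pq by (simp add: inst_Eq CT_subst map_CT_subst)
qed

lemma fn_cong:
  "list_all2 (\<lambda>a b. Eq a b \<in> M) ts us \<Longrightarrow> Fn f (ps @ ts) \<in> CT K \<Longrightarrow>
   Eq (Fn f (ps @ ts)) (Fn f (ps @ us)) \<in> M"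
proof (induction ts us arbitrary: ps rule: list_all2_induct)
  case Nil then show ?case by (simp add: eq_refl_in)
next
  case (Cons a ts b us)
  have 1: "Eq (Fn f (ps @ a # ts)) (Fn f (ps @ b # ts)) \<in> M" using Cons(1,4) by (rule fn_cong1)
  have "b \<in> CT K" using Cons(1) M_sub ClK_Eq by blast
  then have "Fn f ((ps @ [b]) @ ts) \<in> CT K" using Cons(4) by (auto simp: CT_Fn)
  then have "Eq (Fn f ((ps @ [b]) @ ts)) (Fn f ((ps @ [b]) @ us)) \<in> M" by (rule Cons.IH)
  then show ?case using 1 eq_trans_in by simp
qed

lemma atom_cong1:
  assumes "Eq a b \<in> M" "Atom p (ps @ a # qs) \<in> M"
  shows "Atom p (ps @ b # qs) \<in> M"
proof -
  have ab: "a \<in> CT K" "b \<in> CT K" using assms(1) M_sub ClK_Eq by blast+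
  have "Atom p (ps @ a # qs) \<in> ClK K" using assms(2) M_sub by blast
  then have pq: "set ps \<subseteq> CT K" "set qs \<subseteq> CT K" "PS p (length (ps @ a # qs)) \<in> K"
    by (auto simp: ClK_Atom)
  have e1: "inst a (Atom p (ps @ Var 0 # qs)) = Atom p (ps @ a # qs)"
    using pq by (simp add: inst_Atom map_CT_subst)
  have e2: "inst b (Atom p (ps @ Var 0 # qs)) = Atom p (ps @ b # qs)"
    using pq by (simp add: inst_Atom map_CT_subst)
  have "Atom p (ps @ b # qs) \<in> ClK K"
    using pq ab unfolding ClK_Atom by simp
  then show ?thesis using leib[OF assms(1), of "Atom p (ps @ Var 0 # qs)"] assms(2) e1 e2 by simp
qed

lemma atom_cong:
  "list_all2 (\<lambda>a b. Eq a b \<in> M) ts us \<Longrightarrow> Atom p (ps @ ts) \<in> M \<Longrightarrow> Atom p (ps @ us) \<in> M"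
proof (induction ts us arbitrary: ps rule: list_all2_induct)
  case Nil then show ?case by simp
next
  case (Cons a ts b us)
  have "Atom p (ps @ b # ts) \<in> M" using Cons(1,4) by (rule atom_cong1)
  then have "Atom p ((ps @ [b]) @ ts) \<in> M" by simp
  then have "Atom p ((ps @ [b]) @ us) \<in> M" by (rule Cons.IH)
  then show ?case by simp
qed

end

locale tmod = mc +
  fixes c0 assumes c0: "c0 \<in> CT K"
begin

definition cls where "cls t = {u \<in> CT K. Eq t u \<in> M}"
definition TD where "TD = cls ` CT K"
definition rep :: "('a, 'b) tm set \<Rightarrow> ('a, 'b) tm" where "rep X = (SOME t. t \<in> X)"
definition TF where
  "TF f xs = (if FS f (length xs) \<in> K \<and> set xs \<subseteq> TD then cls (Fn f (map rep xs)) else cls c0)"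
definition TP where "TP p xs = (Atom p (map rep xs) \<in> M)"
definition henkin where
  "henkin \<longleftrightarrow> (\<forall>A. fm.Ex A \<in> M \<longrightarrow> (\<exists>t\<in>CT K. inst t A \<in> M)) \<and>
     (\<forall>A. fm.All A \<in> ClK K \<longrightarrow> fm.All A \<notin> M \<longrightarrow> (\<exists>t\<in>CT K. inst t A \<notin> M))"

lemma self_cls: "t \<in> CT K \<Longrightarrow> t \<in> cls t"
  by (simp add: cls_def eq_refl_in)

lemma rep_cls: "t \<in> CT K \<Longrightarrow> rep (cls t) \<in> CT K \<and> Eq t (rep (cls t)) \<in> M"
proof -
  assume t: "t \<in> CT K"
  have "rep (cls t) \<in> cls t" unfolding rep_def using self_cls[OF t] by (rule someI)
  then show ?thesis by (simp add: cls_def)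
qed

lemma rep_TD: "X \<in> TD \<Longrightarrow> rep X \<in> CT K"
  using rep_cls by (auto simp: TD_def)

lemma cls_eq: "s \<in> CT K \<Longrightarrow> t \<in> CT K \<Longrightarrow> cls s = cls t \<longleftrightarrow> Eq s t \<in> M"
proof
  assume st: "s \<in> CT K" "t \<in> CT K" and e: "cls s = cls t"
  then have "t \<in> cls s" using self_cls by simp
  then show "Eq s t \<in> M" by (simp add: cls_def)
next
  assume st: "s \<in> CT K" "t \<in> CT K" and e: "Eq s t \<in> M"
  show "cls s = cls t"
    unfolding cls_def using e eq_sym_in eq_trans_in by blast
qed

lemma TD_ne: "TD \<noteq> {}"
  using c0 by (auto simp: TD_def)

lemma struct_T: "struct TD TF"
proof -
  have "TF f xs \<in> TD" if "set xs \<subseteq> TD" for f xs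
  proof (cases "FS f (length xs) \<in> K")
    case True
    have "set (map rep xs) \<subseteq> CT K" using that rep_TD by auto
    then have "Fn f (map rep xs) \<in> CT K" using True by (simp add: CT_Fn)
    then show ?thesis using True that by (simp add: TF_def TD_def)
  next
    case False then show ?thesis using c0 by (simp add: TF_def TD_def)
  qed
  then show ?thesis using TD_ne by (simp add: struct_def)
qed

lemma rel_rep: "set ts \<subseteq> CT K \<Longrightarrow> list_all2 (\<lambda>a b. Eq a b \<in> M) (map (rep \<circ> cls) ts) ts"
  by (auto simp: list_all2_map1 list_all2_same dest: rep_cls intro: eq_sym_in)

lemma rel_rep': "set ts \<subseteq> CT K \<Longrightarrow> list_all2 (\<lambda>a b. Eq a b \<in> M) ts (map (rep \<circ> cls) ts)"
  by (auto simp: list_all2_map2 list_all2_same dest: rep_cls)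

lemma ev_T: "t \<in> CT K \<Longrightarrow> ev TF e t = cls t"
proof (induction t rule: tm_ind)
  case (Var n) then show ?case by (simp add: CT_def)
next
  case (Fn f ts)
  have ts: "set ts \<subseteq> CT K" "FS f (length ts) \<in> K" using Fn.prems by (auto simp: CT_Fn)
  have m: "map (ev TF e) ts = map cls ts" using Fn.IH ts by auto
  have "ev TF e (Fn f ts) = TF f (map cls ts)" by (simp only: ev.simps m)
  also have "\<dots> = cls (Fn f (map (rep \<circ> cls) ts))"
    using ts by (auto simp: TF_def TD_def)
  also have "\<dots> = cls (Fn f ts)"
  proof (rule cls_eq[THEN iffD2])
    show "Fn f (map (rep \<circ> cls) ts) \<in> CT K" using ts rep_cls by (auto simp: CT_Fn)
    then show "Eq (Fn f (map (rep \<circ> cls) ts)) (Fn f ts) \<in> M"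
      using fn_cong[OF rel_rep[OF ts(1)], of f "[]"] by simp
    show "Fn f ts \<in> CT K" by (rule Fn.prems)
  qed
  finally show ?case .
qed

lemma truth:
  "B \<in> ClK K \<Longrightarrow> ((henkin \<or> uni True B) \<longrightarrow> B \<in> M \<longrightarrow> hol TD TF TP e B) \<and>
     ((henkin \<or> uni False B) \<longrightarrow> B \<notin> M \<longrightarrow> \<not> hol TD TF TP e B)"
proof (induction "fsize B" arbitrary: B e rule: less_induct)
  case less
  note IH = less.hyps and BK = less.prems
  show ?case
  proof (cases B)
    case (Atom p ts)
    have ts: "set ts \<subseteq> CT K" using BK Atom by (auto simp: ClK_Atom)
    have m: "map (ev TF e) ts = map cls ts" using ts ev_T by auto
    have "hol TD TF TP e B \<longleftrightarrow> Atom p (map (rep \<circ> cls) ts) \<in> M"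
      unfolding Atom by (simp only: hol.simps m TP_def map_map)
    also have "\<dots> \<longleftrightarrow> B \<in> M"
      using atom_cong[OF rel_rep[OF ts], of p "[]"] atom_cong[OF rel_rep'[OF ts], of p "[]"] Atom
      by auto
    finally show ?thesis by blast
  next
    case (Eq s t)
    have "s \<in> CT K" "t \<in> CT K" using BK Eq by (auto simp: ClK_Eq)
    then show ?thesis using Eq by (simp add: ev_T cls_eq)
  next
    case (Neg A)
    have A: "A \<in> ClK K" using BK Neg by (simp add: ClK_def)
    have "fsize A < fsize B" using Neg by simp
    note ih = IH[OF this A, of e]
    show ?thesis using ih neg_in[OF A] Neg by auto
  next
    case (Conj A1 A2)
    have A: "A1 \<in> ClK K" "A2 \<in> ClK K" using BK Conj by (auto simp: ClK_def)
    have "fsize A1 < fsize B" "fsize A2 < fsize B" using Conj by auto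
    note ih1 = IH[OF this(1) A(1), of e] and ih2 = IH[OF this(2) A(2), of e]
    show ?thesis using ih1 ih2 conj_in[of A1 A2] BK Conj by auto
  next
    case (Disj A1 A2)
    have A: "A1 \<in> ClK K" "A2 \<in> ClK K" using BK Disj by (auto simp: ClK_def)
    have "fsize A1 < fsize B" "fsize A2 < fsize B" using Disj by auto
    note ih1 = IH[OF this(1) A(1), of e] and ih2 = IH[OF this(2) A(2), of e]
    show ?thesis using ih1 ih2 disj_in[of A1 A2] BK Disj by auto
  next
    case (All A)
    have ihi: "((henkin \<or> uni True A) \<longrightarrow> inst t A \<in> M \<longrightarrow> hol TD TF TP (case_nat (cls t) e) A) \<and>
       ((henkin \<or> uni False A) \<longrightarrow> inst t A \<notin> M \<longrightarrow> \<not> hol TD TF TP (case_nat (cls t) e) A)"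
      if t: "t \<in> CT K" for t
    proof -
      have "inst t A \<in> ClK K" using BK All t by (intro inst_ClK) auto
      moreover have "fsize (inst t A) < fsize B" using All by simp
      ultimately show ?thesis using IH[of "inst t A" e] t by (simp add: hol_inst ev_T uni_inst)
    qed
    show ?thesis
    proof (intro conjI impI)
      assume "henkin \<or> uni True B" "B \<in> M"
      then show "hol TD TF TP e B" using All ihi all_in by (auto simp: TD_def)
    next
      assume "henkin \<or> uni False B" "B \<notin> M"
      then obtain t where "t \<in> CT K" "inst t A \<notin> M" using All BK by (auto simp: henkin_def)
      then show "\<not> hol TD TF TP e B" using All ihi \<open>henkin \<or> uni False B\<close> by (auto simp: TD_def)
    qed
  next
    case (Ex A)
    have ihi: "((henkin \<or> uni True A) \<longrightarrow> inst t A \<in> M \<longrightarrow> hol TD TF TP (case_nat (cls t) e) A) \<and>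
       ((henkin \<or> uni False A) \<longrightarrow> inst t A \<notin> M \<longrightarrow> \<not> hol TD TF TP (case_nat (cls t) e) A)"
      if t: "t \<in> CT K" for t
    proof -
      have "inst t A \<in> ClK K" using BK Ex t by (intro inst_ClK) auto
      moreover have "fsize (inst t A) < fsize B" using Ex by simp
      ultimately show ?thesis using IH[of "inst t A" e] t by (simp add: hol_inst ev_T uni_inst)
    qed
    show ?thesis
    proof (intro conjI impI)
      assume "henkin \<or> uni True B" "B \<in> M"
      then obtain t where "t \<in> CT K" "inst t A \<in> M" using Ex by (auto simp: henkin_def)
      then show "hol TD TF TP e B" using Ex ihi \<open>henkin \<or> uni True B\<close> by (auto simp: TD_def)
    next
      assume h: "henkin \<or> uni False B" "B \<notin> M"
      then have "Neg B \<in> M" using neg_in BK by blast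
      then have "\<forall>t\<in>CT K. inst t A \<notin> M" using nex_in Ex by blast
      then show "\<not> hol TD TF TP e B" using Ex ihi h(1) by (auto simp: TD_def)
    qed
  qed
qed

lemma model_T: "B \<in> M \<Longrightarrow> henkin \<or> uni True B \<Longrightarrow> models TD TF TP B"
  using truth M_sub by (auto simp: models_def)

end


lemma fv_qf[simp]: "fv (qf Q A) = {n. Suc n \<in> fv A}"
  by (cases Q) auto

lemma syms_qf[simp]: "syms (qf Q A) = syms A"
  by (cases Q) auto

lemma dual_eq[simp]: "(dual Q = QEx) \<longleftrightarrow> Q \<noteq> QEx" "(dual Q = QAll) \<longleftrightarrow> Q \<noteq> QAll"
  by (cases Q; simp)+

lemma quant_cases2: "Q \<noteq> QEx \<longleftrightarrow> Q = QAll"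
  by (cases Q) auto

lemma finite_Suc_fv[simp]: "finite {n. Suc n \<in> fv A}"
  by (rule finite_Suc_pre) simp

lemma fv_sk_term[simp]: "fv_tm (sk_term Q A) = {n. Suc n \<in> fv A}"
  by (auto simp: sk_term_def)

lemma syms_sk_term[simp]: "syms_tm (sk_term Q A) = {FS (Sk Q A) (card {n. Suc n \<in> fv A})}"
  by (auto simp: sk_term_def)

lemma fv_sk: "fv (sk Q A) \<subseteq> fv A"
proof (induction Q A rule: sk.induct)
  case (6 Q A)
  show ?case
  proof (cases "Q = QAll")
    case True
    then have "fv (sk Q (fm.All A)) \<subseteq> fv (inst (sk_term QAll A) A)" using 6 by simp
    also have "\<dots> \<subseteq> fv (fm.All A)" by (auto simp: fv_inst)
    finally show ?thesis .
  next
    case False then show ?thesis using 6 by auto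
  qed
next
  case (7 Q A)
  show ?case
  proof (cases "Q = QEx")
    case True
    then have "fv (sk Q (fm.Ex A)) \<subseteq> fv (inst (sk_term QEx A) A)" using 7 by simp
    also have "\<dots> \<subseteq> fv (fm.Ex A)" by (auto simp: fv_inst)
    finally show ?thesis .
  next
    case False then show ?thesis using 7 by auto
  qed
qed auto

lemma sk_sym_in: "syms A \<subseteq> L \<union> sk_syms L \<Longrightarrow> FS (Sk Q A) (card {n. Suc n \<in> fv A}) \<in> sk_syms L"
  using sk_syms.intros[of Q A L] by auto

lemma syms_sk: "syms A \<subseteq> L \<union> sk_syms L \<Longrightarrow> syms (sk Q A) \<subseteq> L \<union> sk_syms L"
proof (induction Q A rule: sk.induct)
  case (6 Q A)
  show ?case
  proof (cases "Q = QAll")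
    case True
    have "syms (inst (sk_term QAll A) A) \<subseteq> L \<union> sk_syms L"
      using 6(3) sk_sym_in[of A L QAll] by (auto simp: syms_inst)
    then show ?thesis using 6 True by simp
  next
    case False then show ?thesis using 6 by auto
  qed
next
  case (7 Q A)
  show ?case
  proof (cases "Q = QEx")
    case True
    have "syms (inst (sk_term QEx A) A) \<subseteq> L \<union> sk_syms L"
      using 7(3) sk_sym_in[of A L QEx] by (auto simp: syms_inst)
    then show ?thesis using 7 True by simp
  next
    case False then show ?thesis using 7 by auto
  qed
qed auto

lemma uni_sk: "uni (Q = QEx) (sk Q A)"
proof (induction Q A rule: sk.induct)
  case (5 Q A) then show ?case by (cases Q) auto
next
  case (6 Q A) then show ?case by (cases Q) (auto simp: uni_inst)
next
  case (7 Q A) then show ?case by (cases Q) (auto simp: uni_inst)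
qed auto

lemma sk_sound:
  assumes "struct D F"
  shows "range e \<subseteq> D \<Longrightarrow> (Q = QEx \<longrightarrow> hol D F P e (sk Q A) \<longrightarrow> hol D F P e A) \<and>
                       (Q = QAll \<longrightarrow> hol D F P e A \<longrightarrow> hol D F P e (sk Q A))"
proof (induction Q A arbitrary: e rule: sk.induct)
  case (5 Q A) then show ?case by (cases Q) auto
next
  case (6 Q A)
  show ?case
  proof (cases Q)
    case QAll
    have "hol D F P e (fm.All A) \<Longrightarrow> hol D F P e (inst (sk_term QAll A) A)"
      using ev_in[OF assms 6(3)] by (simp add: hol_inst)
    then show ?thesis using 6(1)[OF QAll 6(3)] QAll by simp
  next
    case QEx
    have "hol D F P (case_nat d e) (sk QEx A) \<Longrightarrow> hol D F P (case_nat d e) A" if "d \<in> D" for d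
      using 6(2)[of "case_nat d e"] QEx range_case_nat[OF 6(3) that] by simp
    then show ?thesis using QEx by auto
  qed
next
  case (7 Q A)
  show ?case
  proof (cases Q)
    case QEx
    have "hol D F P e (inst (sk_term QEx A) A) \<Longrightarrow> hol D F P e (fm.Ex A)"
      using ev_in[OF assms 7(3)] by (auto simp: hol_inst)
    then show ?thesis using 7(1)[OF QEx 7(3)] QEx by simp
  next
    case QAll
    have "hol D F P (case_nat d e) A \<Longrightarrow> hol D F P (case_nat d e) (sk QAll A)" if "d \<in> D" for d
      using 7(2)[of "case_nat d e"] QAll range_case_nat[OF 7(3) that] by simp
    then show ?thesis using QAll by auto
  qed
qed auto

definition wit :: "'u set \<Rightarrow> (('f,'p) sym \<Rightarrow> 'u list \<Rightarrow> 'u) \<Rightarrow> ('p \<Rightarrow> 'u list \<Rightarrow> bool) \<Rightarrow> quant \<Rightarrow> ('f,'p) fm \<Rightarrow> bool" where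
  "wit D F P Q B \<longleftrightarrow> (\<forall>e. range e \<subseteq> D \<longrightarrow>
      hol D F P e (qf Q B) = hol D F P (case_nat (ev F e (sk_term Q B)) e) B)"

lemma sk_complete:
  assumes "struct D F" "\<And>Q B. FS (Sk Q B) (card {n. Suc n \<in> fv B}) \<in> sk_syms L \<Longrightarrow> wit D F P Q B"
  shows "syms A \<subseteq> L \<union> sk_syms L \<Longrightarrow> range e \<subseteq> D \<Longrightarrow>
     (Q = QEx \<longrightarrow> hol D F P e A \<longrightarrow> hol D F P e (sk Q A)) \<and>
     (Q = QAll \<longrightarrow> hol D F P e (sk Q A) \<longrightarrow> hol D F P e A)"
proof (induction Q A arbitrary: e rule: sk.induct)
  case (5 Q A) then show ?case by (cases Q) auto
next
  case (6 Q A)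
  show ?case
  proof (cases Q)
    case QAll
    have sA: "syms A \<subseteq> L \<union> sk_syms L" using 6(3) by simp
    have w: "wit D F P QAll A" by (rule assms(2)) (rule sk_sym_in[OF sA])
    have s: "syms (inst (sk_term QAll A) A) \<subseteq> L \<union> sk_syms L"
      using sA sk_sym_in[of A L QAll] by (auto simp: syms_inst)
    have "hol D F P e (inst (sk_term QAll A) A) \<Longrightarrow> hol D F P e (fm.All A)"
      using w 6(4) by (simp add: wit_def hol_inst)
    then show ?thesis using 6(1)[OF QAll s 6(4)] QAll by simp
  next
    case QEx
    have "hol D F P (case_nat d e) A \<Longrightarrow> hol D F P (case_nat d e) (sk QEx A)" if "d \<in> D" for d
      using 6(2)[of "case_nat d e"] 6(3) QEx range_case_nat[OF 6(4) that] by simp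
    then show ?thesis using QEx by auto
  qed
next
  case (7 Q A)
  show ?case
  proof (cases Q)
    case QEx
    have sA: "syms A \<subseteq> L \<union> sk_syms L" using 7(3) by simp
    have w: "wit D F P QEx A" by (rule assms(2)) (rule sk_sym_in[OF sA])
    have s: "syms (inst (sk_term QEx A) A) \<subseteq> L \<union> sk_syms L"
      using sA sk_sym_in[of A L QEx] by (auto simp: syms_inst)
    have "hol D F P e (fm.Ex A) \<Longrightarrow> hol D F P e (inst (sk_term QEx A) A)"
      using w 7(4) by (simp add: wit_def hol_inst)
    then show ?thesis using 7(1)[OF QEx s 7(4)] QEx by simp
  next
    case QAll
    have "hol D F P (case_nat d e) (sk QAll A) \<Longrightarrow> hol D F P (case_nat d e) A" if "d \<in> D" for d
      using 7(2)[of "case_nat d e"] 7(3) QAll range_case_nat[OF 7(4) that] by simp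
    then show ?thesis using QAll by auto
  qed
qed auto


definition xenv :: "'u set \<Rightarrow> nat list \<Rightarrow> 'u list \<Rightarrow> nat \<Rightarrow> 'u" where
  "xenv D vs xs v = (case map_of (zip vs xs) v of Some d \<Rightarrow> d | None \<Rightarrow> (SOME d. d \<in> D))"

primrec xev :: "'u set \<Rightarrow> (('f,'p) sym \<Rightarrow> 'u list \<Rightarrow> 'u) \<Rightarrow> ('p \<Rightarrow> 'u list \<Rightarrow> bool) \<Rightarrow> ('f,'p) lsym set
    \<Rightarrow> ('f,'p) tm \<Rightarrow> (nat \<Rightarrow> 'u) \<Rightarrow> 'u"
and xsym :: "'u set \<Rightarrow> (('f,'p) sym \<Rightarrow> 'u list \<Rightarrow> 'u) \<Rightarrow> ('p \<Rightarrow> 'u list \<Rightarrow> bool) \<Rightarrow> ('f,'p) lsym set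
    \<Rightarrow> ('f,'p) sym \<Rightarrow> 'u list \<Rightarrow> 'u"
and xhol :: "'u set \<Rightarrow> (('f,'p) sym \<Rightarrow> 'u list \<Rightarrow> 'u) \<Rightarrow> ('p \<Rightarrow> 'u list \<Rightarrow> bool) \<Rightarrow> ('f,'p) lsym set
    \<Rightarrow> ('f,'p) fm \<Rightarrow> (nat \<Rightarrow> 'u) \<Rightarrow> bool" where
  "xev D F P L (Var n) e = e n"
| "xev D F P L (Fn f ts) e = xsym D F P L f (map (\<lambda>t. xev D F P L t e) ts)"
| "xsym D F P L (Sym f) xs = F (Sym f) xs"
| "xsym D F P L (Sk Q B) xs =
    (if FS (Sk Q B) (length xs) \<notin> L \<and> length xs = card (fv (qf Q B))
     then (SOME d. d \<in> D \<and>
        ((\<exists>d'\<in>D. xhol D F P L B (case_nat d' (xenv D (sorted_list_of_set (fv (qf Q B))) xs)) = (Q = QEx))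
          \<longrightarrow> xhol D F P L B (case_nat d (xenv D (sorted_list_of_set (fv (qf Q B))) xs)) = (Q = QEx)))
     else F (Sk Q B) xs)"
| "xhol D F P L (Atom p ts) e = P p (map (\<lambda>t. xev D F P L t e) ts)"
| "xhol D F P L (Eq s t) e = (xev D F P L s e = xev D F P L t e)"
| "xhol D F P L (Neg A) e = (\<not> xhol D F P L A e)"
| "xhol D F P L (Conj A B) e = (xhol D F P L A e \<and> xhol D F P L B e)"
| "xhol D F P L (Disj A B) e = (xhol D F P L A e \<or> xhol D F P L B e)"
| "xhol D F P L (fm.All A) e = (\<forall>d\<in>D. xhol D F P L A (case_nat d e))"
| "xhol D F P L (fm.Ex A) e = (\<exists>d\<in>D. xhol D F P L A (case_nat d e))"

lemma xev_eq: "xev D F P L t e = ev (xsym D F P L) e t"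
proof (induction t rule: tm_ind)
  case (Fn f ts)
  have "map (\<lambda>t. xev D F P L t e) ts = map (ev (xsym D F P L) e) ts" using Fn.IH by auto
  then show ?case by (simp only: xev.simps ev.simps)
qed simp

lemma xhol_eq: "xhol D F P L A e = hol D (xsym D F P L) P e A"
proof (induction A arbitrary: e rule: fm_ind)
  case (Atom p ts)
  have "map (\<lambda>t. xev D F P L t e) ts = map (ev (xsym D F P L) e) ts" using xev_eq by auto
  then show ?case by (simp only: xhol.simps hol.simps)
qed (simp_all add: xev_eq)

lemma xsym_L: "FS f (length xs) \<in> L \<Longrightarrow> xsym D F P L f xs = F f xs"
  by (cases f) auto

lemma struct_x:
  assumes "struct D F"
  shows "struct D (xsym D F P L)"
proof -
  have ne: "D \<noteq> {}" using assms by (simp add: struct_def)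
  have "xsym D F P L f xs \<in> D" if "set xs \<subseteq> D" for f xs
  proof (cases f)
    case (Sym g) then show ?thesis using assms that by (simp add: struct_def)
  next
    case (Sk Q B)
    let ?c = "\<lambda>d. d \<in> D \<and>
        ((\<exists>d'\<in>D. xhol D F P L B (case_nat d' (xenv D (sorted_list_of_set (fv (qf Q B))) xs)) = (Q = QEx))
          \<longrightarrow> xhol D F P L B (case_nat d (xenv D (sorted_list_of_set (fv (qf Q B))) xs)) = (Q = QEx))"
    have "\<exists>d. ?c d" using ne by blast
    then have "?c (SOME d. ?c d)" by (rule someI_ex)
    then show ?thesis using Sk assms that by (auto simp: struct_def)
  qed
  then show ?thesis using ne by (simp add: struct_def)
qed

lemma xenv_eq: "distinct vs \<Longrightarrow> v \<in> set vs \<Longrightarrow> xenv D vs (map e vs) v = e v"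
  by (simp add: xenv_def map_of_zip_map)

lemma wit_x:
  fixes D :: "'u set"
  assumes "struct D F" "FS (Sk Q B) (card {n. Suc n \<in> fv B}) \<notin> L"
  shows "wit D (xsym D F P L) P Q B"
  unfolding wit_def
proof (intro allI impI)
  fix e :: "nat \<Rightarrow> 'u" assume e: "range e \<subseteq> D"
  let ?F = "xsym D F P L"
  let ?vs = "sorted_list_of_set (fv (qf Q B))"
  let ?xs = "map e ?vs"
  let ?E = "xenv D ?vs ?xs"
  have ne: "D \<noteq> {}" using assms by (simp add: struct_def)
  have hE: "xhol D F P L B (case_nat d ?E) = hol D ?F P (case_nat d e) B" for d
  proof -
    have "xhol D F P L B (case_nat d ?E) = hol D ?F P (case_nat d ?E) B" by (simp add: xhol_eq)
    also have "\<dots> = hol D ?F P (case_nat d e) B"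
    proof (rule hol_cong_fv)
      fix n assume "n \<in> fv B"
      then show "case_nat d ?E n = case_nat d e n"
        by (cases n) (auto simp: xenv_eq)
    qed
    finally show ?thesis .
  qed
  have evt: "ev ?F e (sk_term Q B) = xsym D F P L (Sk Q B) ?xs"
    by (simp add: sk_term_def comp_def)
  let ?c = "\<lambda>d. d \<in> D \<and> ((\<exists>d'\<in>D. hol D ?F P (case_nat d' e) B = (Q = QEx))
                   \<longrightarrow> hol D ?F P (case_nat d e) B = (Q = QEx))"
  have "xsym D F P L (Sk Q B) ?xs = (SOME d. ?c d)"
    using assms(2) by (simp add: hE[simplified])
  moreover have "\<exists>d. ?c d" using ne by blast
  then have "?c (SOME d. ?c d)" by (rule someI_ex)
  ultimately have c: "?c (ev ?F e (sk_term Q B))" unfolding evt by simp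
  show "hol D ?F P e (qf Q B) = hol D ?F P (case_nat (ev ?F e (sk_term Q B)) e) B"
  proof (cases Q)
    case QAll
    then show ?thesis using c by (simp only: qf.simps hol.simps quant.distinct simp_thms) blast
  next
    case QEx
    then show ?thesis using c by (simp only: qf.simps hol.simps simp_thms) blast
  qed
qed

lemma ev_cong_F: "(\<And>f xs. FS f (length xs) \<in> syms_tm t \<Longrightarrow> F f xs = F' f xs) \<Longrightarrow> ev F e t = ev F' e t"
proof (induction t rule: tm_ind)
  case (Fn f ts)
  have "map (ev F e) ts = map (ev F' e) ts"
  proof (rule map_cong[OF refl])
    fix t assume "t \<in> set ts"
    then show "ev F e t = ev F' e t" using Fn.prems by (intro Fn.IH) auto
  qed
  then show ?case using Fn.prems[of f "map (ev F' e) ts"] by (simp del: map_eq_conv)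
qed simp

lemma hol_cong_F: "(\<And>f xs. FS f (length xs) \<in> syms A \<Longrightarrow> F f xs = F' f xs) \<Longrightarrow> hol D F P e A = hol D F' P e A"
proof (induction A arbitrary: e rule: fm_ind)
  case (Atom p ts)
  have "map (ev F e) ts = map (ev F' e) ts"
  proof (rule map_cong[OF refl])
    fix t assume "t \<in> set ts"
    then show "ev F e t = ev F' e t" using Atom.prems by (intro ev_cong_F) auto
  qed
  then show ?case by (simp del: map_eq_conv)
next
  case (Eq s t)
  have "ev F e s = ev F' e s" "ev F e t = ev F' e t" using Eq.prems by (intro ev_cong_F; simp)+
  then show ?case by simp
next
  case (Neg A)
  have "hol D F P e A = hol D F' P e A" by (rule Neg.IH) (rule Neg.prems, simp)
  then show ?case by simp
next
  case (Conj A B)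
  have "hol D F P e A = hol D F' P e A" by (rule Conj.IH) (rule Conj.prems, simp)
  moreover have "hol D F P e B = hol D F' P e B" by (rule Conj.IH) (rule Conj.prems, simp)
  ultimately show ?case by simp
next
  case (Disj A B)
  have "hol D F P e A = hol D F' P e A" by (rule Disj.IH) (rule Disj.prems, simp)
  moreover have "hol D F P e B = hol D F' P e B" by (rule Disj.IH) (rule Disj.prems, simp)
  ultimately show ?case by simp
next
  case (All A)
  have "\<And>d. hol D F P (case_nat d e) A = hol D F' P (case_nat d e) A" by (rule All.IH) (rule All.prems, simp)
  then show ?case by simp
next
  case (Ex A)
  have "\<And>d. hol D F P (case_nat d e) A = hol D F' P (case_nat d e) A" by (rule Ex.IH) (rule Ex.prems, simp)
  then show ?case by simp
qed


lemma hol_alls: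
  "hol D F P e (alls k B) \<longleftrightarrow> (\<forall>f. (\<forall>i<k. f i \<in> D) \<longrightarrow> hol D F P (\<lambda>n. if n < k then f n else e (n - k)) B)"
proof (induction k arbitrary: e)
  case 0 then show ?case by simp
next
  case (Suc k)
  have "hol D F P e (alls (Suc k) B) \<longleftrightarrow>
     (\<forall>d\<in>D. \<forall>f. (\<forall>i<k. f i \<in> D) \<longrightarrow> hol D F P (\<lambda>n. if n < k then f n else case_nat d e (n - k)) B)"
    using Suc by simp
  also have "\<dots> \<longleftrightarrow> (\<forall>f. (\<forall>i<Suc k. f i \<in> D) \<longrightarrow> hol D F P (\<lambda>n. if n < Suc k then f n else e (n - Suc k)) B)"
  proof
    assume a: "\<forall>d\<in>D. \<forall>f. (\<forall>i<k. f i \<in> D) \<longrightarrow> hol D F P (\<lambda>n. if n < k then f n else case_nat d e (n - k)) B"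
    show "\<forall>f. (\<forall>i<Suc k. f i \<in> D) \<longrightarrow> hol D F P (\<lambda>n. if n < Suc k then f n else e (n - Suc k)) B"
    proof (intro allI impI)
      fix f assume f: "\<forall>i<Suc k. f i \<in> D"
      have "(\<lambda>n. if n < k then f n else case_nat (f k) e (n - k)) = (\<lambda>n. if n < Suc k then f n else e (n - Suc k))"
        by (rule ext) (auto split: nat.split simp: not_less less_Suc_eq Suc_diff_le diff_Suc)
      then show "hol D F P (\<lambda>n. if n < Suc k then f n else e (n - Suc k)) B"
        using a f by (metis lessI less_SucI)
    qed
  next
    assume a: "\<forall>f. (\<forall>i<Suc k. f i \<in> D) \<longrightarrow> hol D F P (\<lambda>n. if n < Suc k then f n else e (n - Suc k)) B"
    show "\<forall>d\<in>D. \<forall>f. (\<forall>i<k. f i \<in> D) \<longrightarrow> hol D F P (\<lambda>n. if n < k then f n else case_nat d e (n - k)) B"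
    proof (intro ballI allI impI)
      fix d f assume d: "d \<in> D" and f: "\<forall>i<k. f i \<in> D"
      let ?f = "f(k := d)"
      have "(\<lambda>n. if n < k then f n else case_nat d e (n - k)) = (\<lambda>n. if n < Suc k then ?f n else e (n - Suc k))"
        by (rule ext) (auto split: nat.split simp: not_less less_Suc_eq Suc_diff_le diff_Suc)
      moreover have "\<forall>i<Suc k. ?f i \<in> D" using d f by (auto simp: less_Suc_eq)
      ultimately show "hol D F P (\<lambda>n. if n < k then f n else case_nat d e (n - k)) B"
        using a by metis
    qed
  qed
  finally show ?case .
qed

lemma fv_alls: "fv (alls k B) = {n. n + k \<in> fv B}"
  by (induction k) auto

lemma syms_alls[simp]: "syms (alls k B) = syms B"
  by (induction k) auto

lemma fv_Imp[simp]: "fv (Imp A B) = fv A \<union> fv B" and syms_Imp[simp]: "syms (Imp A B) = syms A \<union> syms B"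
  by (simp_all add: Imp_def)

definition rank :: "nat set \<Rightarrow> nat \<Rightarrow> nat" where
  "rank S v = card {u\<in>S. u < v}"

lemma rank_lt: "finite S \<Longrightarrow> v \<in> S \<Longrightarrow> rank S v < card S"
  unfolding rank_def by (rule psubset_card_mono) auto

lemma rank_mono: "finite S \<Longrightarrow> u \<in> S \<Longrightarrow> u < v \<Longrightarrow> rank S u < rank S v"
  unfolding rank_def by (rule psubset_card_mono) auto

lemma rank_inj: "finite S \<Longrightarrow> inj_on (rank S) S"
  by (rule inj_onI) (metis linorder_neqE_nat less_irrefl rank_mono)

definition IndP where
  "IndP D F P z s x \<phi> e \<longleftrightarrow>
    (hol D F P (e(x := F (Sym z) [])) \<phi> \<and> (\<forall>d\<in>D. hol D F P (e(x := d)) \<phi> \<longrightarrow> hol D F P (e(x := F (Sym s) [d])) \<phi>))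
    \<longrightarrow> (\<forall>d\<in>D. hol D F P (e(x := d)) \<phi>)"

lemma IndP_cong:
  assumes "\<And>d v. v \<in> fv \<phi> \<Longrightarrow> G d v = (e(x := d)) v"
  shows "IndP D F P z s x \<phi> e \<longleftrightarrow>
    ((hol D F P (G (F (Sym z) [])) \<phi> \<and> (\<forall>d\<in>D. hol D F P (G d) \<phi> \<longrightarrow> hol D F P (G (F (Sym s) [d])) \<phi>))
    \<longrightarrow> (\<forall>d\<in>D. hol D F P (G d) \<phi>))"
proof -
  have "hol D F P (G d) \<phi> = hol D F P (e(x := d)) \<phi>" for d
    by (rule hol_cong_fv) (rule assms)
  then show ?thesis by (simp add: IndP_def)
qed

lemma ind_ax_unfold:
  "ind_ax z s x \<phi> = (let S = fv \<phi> - {x}; k = card S;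
     \<rho> = (\<lambda>v. if v = x then Var 0 else if v \<in> S then Var (Suc (rank S v)) else Var v);
     \<psi> = subst \<rho> \<phi>
   in alls k (Imp (Conj (inst (zero_tm z) \<psi>)
          (fm.All (Imp \<psi> (subst (scons (suc_tm s (Var 0)) (\<lambda>n. Var (Suc n))) \<psi>)))) (fm.All \<psi>)))"
proof -
  have fin: "finite (fv \<phi> - {x})" by simp
  have 1: "set (sorted_list_of_set (fv \<phi> - {x})) = fv \<phi> - {x}"
    using sorted_list_of_set(1)[OF fin] .
  have 2: "length (sorted_list_of_set (fv \<phi> - {x})) = card (fv \<phi> - {x})"
    by (metis 1 distinct_card sorted_list_of_set(3))
  show ?thesis unfolding ind_ax_def Let_def 1 2 rank_def ..
qed

lemma hol_ind_ax:
  fixes D :: "'u set" and \<phi> :: "('f,'p) fm"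
  assumes "struct D F"
  shows "hol D F P e0 (ind_ax z s x \<phi>) \<longleftrightarrow> (\<forall>e. range e \<subseteq> D \<longrightarrow> IndP D F P z s x \<phi> e)"
proof -
  define S where "S = fv \<phi> - {x}"
  define k where "k = card S"
  define \<rho> where "\<rho> = (\<lambda>v. if v = x then Var 0 else if v \<in> S then Var (Suc (rank S v)) else (Var v :: ('f,'p) tm))"
  define \<psi> where "\<psi> = subst \<rho> \<phi>"
  have fS: "finite S" by (simp add: S_def)
  have ind: "ind_ax z s x \<phi> = alls k (Imp (Conj (inst (zero_tm z) \<psi>)
          (fm.All (Imp \<psi> (subst (scons (suc_tm s (Var 0)) (\<lambda>n. Var (Suc n))) \<psi>)))) (fm.All \<psi>))"
    unfolding ind_ax_unfold Let_def S_def k_def \<rho>_def \<psi>_def by (rule refl)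
  define G where "G f d = (\<lambda>v. if v = x then d else f (rank S v))" for f :: "nat \<Rightarrow> 'u" and d
  have key: "hol D F P (case_nat d (\<lambda>n. if n < k then f n else e0 (n - k))) \<psi> = hol D F P (G f d) \<phi>" for f d
    unfolding \<psi>_def hol_subst
  proof (rule hol_cong_fv)
    fix v assume v: "v \<in> fv \<phi>"
    show "ev F (case_nat d (\<lambda>n. if n < k then f n else e0 (n - k))) (\<rho> v) = G f d v"
    proof (cases "v = x")
      case True then show ?thesis by (simp add: \<rho>_def G_def)
    next
      case False
      then have "v \<in> S" using v by (simp add: S_def)
      then have "rank S v < k" using rank_lt[OF fS] by (simp add: k_def)
      then show ?thesis using False \<open>v \<in> S\<close> by (simp add: \<rho>_def G_def)
    qed
  qed
  have body: "hol D F P (\<lambda>n. if n < k then f n else e0 (n - k)) (Imp (Conj (inst (zero_tm z) \<psi>)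
          (fm.All (Imp \<psi> (subst (scons (suc_tm s (Var 0)) (\<lambda>n. Var (Suc n))) \<psi>)))) (fm.All \<psi>))
     \<longleftrightarrow> ((hol D F P (G f (F (Sym z) [])) \<phi> \<and> (\<forall>d\<in>D. hol D F P (G f d) \<phi> \<longrightarrow> hol D F P (G f (F (Sym s) [d])) \<phi>))
    \<longrightarrow> (\<forall>d\<in>D. hol D F P (G f d) \<phi>))" for f
  proof -
    let ?g = "\<lambda>n. if n < k then f n else e0 (n - k)"
    have e1: "(\<lambda>n. ev F (case_nat d ?g) (scons (suc_tm s (Var 0)) (\<lambda>n. Var (Suc n)) n)) = case_nat (F (Sym s) [d]) ?g" for d
      by (rule ext) (simp add: suc_tm_def split: nat.split)
    have i0: "hol D F P ?g (inst (zero_tm z) \<psi>) = hol D F P (G f (F (Sym z) [])) \<phi>"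
      by (simp add: hol_inst zero_tm_def key)
    have i1: "hol D F P (case_nat d ?g) (subst (scons (suc_tm s (Var 0)) (\<lambda>n. Var (Suc n))) \<psi>)
        = hol D F P (G f (F (Sym s) [d])) \<phi>" for d
      by (simp only: hol_subst e1) (rule key)
    show ?thesis by (simp only: hol_Imp hol.simps i0 i1 key)
  qed
  show ?thesis
  proof
    assume h: "hol D F P e0 (ind_ax z s x \<phi>)"
    show "\<forall>e. range e \<subseteq> D \<longrightarrow> IndP D F P z s x \<phi> e"
    proof (intro allI impI)
      fix e :: "nat \<Rightarrow> 'u" assume e: "range e \<subseteq> D"
      define f where "f i = e (inv_into S (rank S) i)" for i
      have fD: "\<forall>i<k. f i \<in> D" using e by (auto simp: f_def)
      have G: "G f d v = (e(x := d)) v" if "v \<in> fv \<phi>" for d v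
      proof (cases "v = x")
        case True then show ?thesis by (simp add: G_def)
      next
        case False
        then have "v \<in> S" using that by (simp add: S_def)
        then show ?thesis using False by (simp add: G_def f_def inv_into_f_f[OF rank_inj[OF fS]])
      qed
      have "\<forall>f. (\<forall>i<k. f i \<in> D) \<longrightarrow> hol D F P (\<lambda>n. if n < k then f n else e0 (n - k)) (Imp (Conj (inst (zero_tm z) \<psi>)
          (fm.All (Imp \<psi> (subst (scons (suc_tm s (Var 0)) (\<lambda>n. Var (Suc n))) \<psi>)))) (fm.All \<psi>))"
        using h unfolding ind hol_alls .
      then have "(\<forall>i<k. f i \<in> D) \<longrightarrow> hol D F P (\<lambda>n. if n < k then f n else e0 (n - k)) (Imp (Conj (inst (zero_tm z) \<psi>)
          (fm.All (Imp \<psi> (subst (scons (suc_tm s (Var 0)) (\<lambda>n. Var (Suc n))) \<psi>)))) (fm.All \<psi>))"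
        by (rule spec)
      then have "hol D F P (\<lambda>n. if n < k then f n else e0 (n - k)) (Imp (Conj (inst (zero_tm z) \<psi>)
          (fm.All (Imp \<psi> (subst (scons (suc_tm s (Var 0)) (\<lambda>n. Var (Suc n))) \<psi>)))) (fm.All \<psi>))"
        using fD by blast
      then have "(hol D F P (G f (F (Sym z) [])) \<phi> \<and> (\<forall>d\<in>D. hol D F P (G f d) \<phi> \<longrightarrow> hol D F P (G f (F (Sym s) [d])) \<phi>))
          \<longrightarrow> (\<forall>d\<in>D. hol D F P (G f d) \<phi>)" unfolding body .
      then show "IndP D F P z s x \<phi> e" using IndP_cong[where G="G f", OF G] by (rule iffD2[rotated])
    qed
  next
    assume h: "\<forall>e. range e \<subseteq> D \<longrightarrow> IndP D F P z s x \<phi> e"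
    obtain d0 where d0: "d0 \<in> D" using assms by (auto simp: struct_def)
    show "hol D F P e0 (ind_ax z s x \<phi>)"
      unfolding ind hol_alls
    proof (intro allI impI)
      fix f assume fD: "\<forall>i<k. f i \<in> D"
      define e where "e v = (if v \<in> S then f (rank S v) else d0)" for v
      have e: "range e \<subseteq> D"
      proof
        fix y assume "y \<in> range e"
        then obtain v where v: "y = e v" by blast
        show "y \<in> D"
        proof (cases "v \<in> S")
          case True then show ?thesis using v fD rank_lt[OF fS True] by (simp add: e_def k_def)
        next
          case False then show ?thesis using v d0 by (simp add: e_def)
        qed
      qed
      have G: "G f d v = (e(x := d)) v" if "v \<in> fv \<phi>" for d v
      proof (cases "v = x")
        case True then show ?thesis by (simp add: G_def)
      next
        case False
        then have "v \<in> S" using that by (simp add: S_def)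
        then show ?thesis using False by (simp add: G_def e_def)
      qed
      have "IndP D F P z s x \<phi> e" using h e by blast
      then show "hol D F P (\<lambda>n. if n < k then f n else e0 (n - k)) (Imp (Conj (inst (zero_tm z) \<psi>)
          (fm.All (Imp \<psi> (subst (scons (suc_tm s (Var 0)) (\<lambda>n. Var (Suc n))) \<psi>)))) (fm.All \<psi>))"
        unfolding body using IndP_cong[where G="G f", OF G] by (rule iffD1[rotated])
    qed
  qed
qed

lemma fv_ind_ax: "fv (ind_ax z s x \<phi>) = {}"
proof -
  define S where "S = fv \<phi> - {x}"
  define k where "k = card S"
  define \<rho> where "\<rho> = (\<lambda>v. if v = x then Var 0 else if v \<in> S then Var (Suc (rank S v)) else (Var v :: ('a,'b) tm))"
  define \<psi> where "\<psi> = subst \<rho> \<phi>"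
  have fS: "finite S" by (simp add: S_def)
  have ind: "ind_ax z s x \<phi> = alls k (Imp (Conj (inst (zero_tm z) \<psi>)
          (fm.All (Imp \<psi> (subst (scons (suc_tm s (Var 0)) (\<lambda>n. Var (Suc n))) \<psi>)))) (fm.All \<psi>))"
    unfolding ind_ax_unfold Let_def S_def k_def \<rho>_def \<psi>_def by (rule refl)
  have r: "fv_tm (\<rho> v) \<subseteq> {..k}" if "v \<in> fv \<phi>" for v
  proof (cases "v = x")
    case True then show ?thesis by (simp add: \<rho>_def)
  next
    case False
    then have "v \<in> S" using that by (simp add: S_def)
    then show ?thesis using rank_lt[OF fS \<open>v \<in> S\<close>] False by (auto simp: \<rho>_def k_def)
  qed
  have p: "fv \<psi> \<subseteq> {..k}" unfolding \<psi>_def fv_subst using r by blast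
  have q: "fv (subst (scons (suc_tm s (Var 0)) (\<lambda>n. Var (Suc n))) \<psi>) \<subseteq> {..k}"
  proof -
    have "fv_tm (scons (suc_tm s (Var 0)) (\<lambda>n. Var (Suc n)) n) \<subseteq> {..k}" if "n \<in> fv \<psi>" for n
      using p that by (cases n) (auto simp: suc_tm_def)
    then show ?thesis unfolding fv_subst by blast
  qed
  have "fv (inst (zero_tm z) \<psi>) \<subseteq> {..<k}"
    using p by (auto simp: fv_inst zero_tm_def)
  moreover have "{n. Suc n \<in> fv \<psi>} \<subseteq> {..<k}" using p by auto
  moreover have "{n. Suc n \<in> fv (subst (scons (suc_tm s (Var 0)) (\<lambda>n. Var (Suc n))) \<psi>)} \<subseteq> {..<k}" using q by auto
  ultimately have "fv (Imp (Conj (inst (zero_tm z) \<psi>)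
          (fm.All (Imp \<psi> (subst (scons (suc_tm s (Var 0)) (\<lambda>n. Var (Suc n))) \<psi>)))) (fm.All \<psi>)) \<subseteq> {..<k}"
    by auto
  then show ?thesis unfolding ind fv_alls by auto
qed

lemma syms_ind_ax: "syms (ind_ax z s x \<phi>) \<subseteq> syms \<phi> \<union> {FS (Sym z) 0, FS (Sym s) 1}"
proof -
  define S where "S = fv \<phi> - {x}"
  define \<rho> where "\<rho> = (\<lambda>v. if v = x then Var 0 else if v \<in> S then Var (Suc (rank S v)) else (Var v :: ('a,'b) tm))"
  define \<psi> where "\<psi> = subst \<rho> \<phi>"
  have ind: "ind_ax z s x \<phi> = alls (card S) (Imp (Conj (inst (zero_tm z) \<psi>)
          (fm.All (Imp \<psi> (subst (scons (suc_tm s (Var 0)) (\<lambda>n. Var (Suc n))) \<psi>)))) (fm.All \<psi>))"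
    unfolding ind_ax_unfold Let_def S_def \<rho>_def \<psi>_def by (rule refl)
  have p: "syms \<psi> = syms \<phi>" unfolding \<psi>_def syms_subst by (auto simp: \<rho>_def split: if_splits)
  have q: "syms (subst (scons (suc_tm s (Var 0)) (\<lambda>n. Var (Suc n))) \<psi>) \<subseteq> syms \<phi> \<union> {FS (Sym s) 1}"
  proof -
    have "syms_tm (scons (suc_tm s (Var 0)) (\<lambda>n. Var (Suc n)) n) \<subseteq> {FS (Sym s) 1}" for n
      by (cases n) (auto simp: suc_tm_def)
    then show ?thesis unfolding syms_subst p by blast
  qed
  have "syms (inst (zero_tm z) \<psi>) \<subseteq> syms \<phi> \<union> {FS (Sym z) 0}"
    using p by (auto simp: syms_inst zero_tm_def)
  then show ?thesis unfolding ind using p q by auto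
qed


lemma size_syms_tm: "FS f n \<in> syms_tm t \<Longrightarrow> size f < size t"
proof (induction t rule: tm_ind)
  case (Fn g ts)
  show ?case
  proof (cases "FS f n = FS g (length ts)")
    case True then show ?thesis by simp
  next
    case False
    then obtain t where "t \<in> set ts" "FS f n \<in> syms_tm t" using Fn.prems by auto
    then have "size f < size t" using Fn.IH by blast
    then have "size f < size_list size ts" by (rule size_list_estimation[OF \<open>t \<in> set ts\<close>])
    then show ?thesis by simp
  qed
qed simp

lemma size_syms: "FS f n \<in> syms A \<Longrightarrow> size f < size A"
proof (induction A rule: fm_ind)
  case (Atom p ts)
  then obtain t where "t \<in> set ts" "FS f n \<in> syms_tm t" by auto
  then have "size f < size t" using size_syms_tm by blast
  then have "size f < size_list size ts" by (rule size_list_estimation[OF \<open>t \<in> set ts\<close>])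
  then show ?case by simp
next
  case (Eq s t) then show ?case using size_syms_tm by fastforce
qed auto

definition hax :: "('f,'p) fm \<Rightarrow> ('f,'p) fm" where
  "hax B = Imp (fm.Ex B) (inst (Fn (Sk QEx B) []) B)"

lemma fv_hax: "fv (fm.Ex B) = {} \<Longrightarrow> fv (hax B) = {}"
  by (auto simp: hax_def fv_inst)

lemma syms_hax: "syms (hax B) \<subseteq> syms B \<union> {FS (Sk QEx B) 0}"
  by (auto simp: hax_def syms_inst)

lemma up_Var: "up Var = Var"
  by (rule ext) (simp add: up_def lift_tm_def split: nat.split)

lemma hax_step:
  assumes Y: "closed_set Y" "\<forall>A\<in>Y. FS (Sk QEx B) 0 \<notin> syms A" and B: "fv (fm.Ex B) = {}" "FS (Sk QEx B) 0 \<notin> syms B"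
    and cons: "\<not> inconsistent Y"
  shows "\<not> inconsistent (insert (hax B) Y)"
proof
  let ?c = "Sk QEx B"
  assume "inconsistent (insert (hax B) Y)"
  then have "prov Y (Neg (hax B))" using fv_hax[OF B(1)] by (intro incons_insert)
  then have ex: "prov Y (fm.Ex B)" and ni: "prov Y (Neg (inst (Fn ?c []) B))"
    by (auto intro: prov_taut1 simp: hax_def tautology_def Imp_def)
  have "prov Y (gsub ?c Var (Var 0) (Neg (inst (Fn ?c []) B)))"
    using Y ni by (rule prov_const)
  moreover have "gsub ?c Var (Var 0) (Neg (inst (Fn ?c []) B)) = Neg B"
  proof -
    have "gsub ?c Var (Var 1) B = B" using B(2) by (intro gsub_id) auto
    moreover have "inst (Var 0) B = B"
      unfolding inst_def
    proof (rule subst_id)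
      fix n assume "n \<in> fv B"
      then have "n = 0" using B(1) by (cases n) auto
      then show "scons (Var 0) Var n = Var n" by simp
    qed
    ultimately show ?thesis by (simp add: gsub_inst up_Var lift_tm_def)
  qed
  ultimately have "prov Y (Neg B)" by simp
  then have "prov Y (fm.All (Neg B))" by (rule prov.gen)
  moreover have "prov Y (Neg (fm.All (Neg B)))" using prov.mp[OF prov.ex_def1 ex] .
  ultimately show False using cons prov_incons by blast
qed

lemma hax_finite:
  assumes X: "X \<subseteq> ClK L" "\<not> inconsistent X" and sf: "skolem_free L"
  shows "finite Bs \<Longrightarrow> (\<forall>B\<in>Bs. fm.Ex B \<in> ClK (L \<union> sk_syms L)) \<Longrightarrow> \<not> inconsistent (X \<union> hax ` Bs)"
proof (induction "card Bs" arbitrary: Bs rule: less_induct)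
  case less
  show ?case
  proof (cases "Bs = {}")
    case True then show ?thesis using X by simp
  next
    case False
    have "Max (size ` Bs) \<in> size ` Bs" using less.prems(1) False by (intro Max_in) auto
    then obtain B where B: "B \<in> Bs" "size B = Max (size ` Bs)" by (metis imageE)
    have mx: "size B' \<le> size B" if "B' \<in> Bs" for B'
      using B(2) less.prems(1) that by simp
    let ?Y = "X \<union> hax ` (Bs - {B})"
    have lt: "card (Bs - {B}) < card Bs" by (rule card_Diff1_less[OF less.prems(1) B(1)])
    have cY: "\<not> inconsistent ?Y"
      by (rule less.hyps[OF lt]) (use less.prems in auto)
    have EB: "fm.Ex B \<in> ClK (L \<union> sk_syms L)" using less.prems(2) B(1) by blast
    then have fvB: "fv (fm.Ex B) = {}" and sB: "syms B \<subseteq> L \<union> sk_syms L" by (auto simp: ClK_def)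
    have "FS (Sk QEx B) (card {n. Suc n \<in> fv B}) \<in> sk_syms L" using sk_sym_in[OF sB] .
    moreover have "{n. Suc n \<in> fv B} = {}" using fvB by simp
    ultimately have cs: "FS (Sk QEx B) 0 \<in> sk_syms L" by simp
    have notB: "FS (Sk QEx B) 0 \<notin> syms B" using size_syms[of "Sk QEx B" 0 B] by auto
    have closedY: "closed_set ?Y"
    proof -
      have "fv (hax B') = {}" if "B' \<in> Bs" for B'
        using less.prems(2) that by (intro fv_hax) (auto simp: ClK_def)
      then show ?thesis using X(1) by (auto simp: closed_set_def ClK_def)
    qed
    have freshY: "\<forall>A\<in>?Y. FS (Sk QEx B) 0 \<notin> syms A"
    proof
      fix A assume "A \<in> ?Y"
      then show "FS (Sk QEx B) 0 \<notin> syms A"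
      proof
        assume "A \<in> X"
        then have "syms A \<subseteq> L" using X(1) by (auto simp: ClK_def)
        then show ?thesis using cs sf by (auto simp: skolem_free_def)
      next
        assume "A \<in> hax ` (Bs - {B})"
        then obtain B' where B': "B' \<in> Bs" "B' \<noteq> B" "A = hax B'" by auto
        have "FS (Sk QEx B) 0 \<notin> syms B'"
          using size_syms[of "Sk QEx B" 0 B'] mx[OF B'(1)] by auto
        then show ?thesis using syms_hax[of B'] B' by auto
      qed
    qed
    have "\<not> inconsistent (insert (hax B) ?Y)"
      by (rule hax_step[OF closedY freshY fvB notB cY])
    moreover have "insert (hax B) ?Y = X \<union> hax ` Bs" using B(1) by auto
    ultimately show ?thesis by simp
  qed
qed

lemma henkin_cons:
  assumes X: "X \<subseteq> ClK L" "\<not> inconsistent X" and sf: "skolem_free L"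
  shows "\<not> inconsistent (X \<union> hax ` {B. fm.Ex B \<in> ClK (L \<union> sk_syms L)})"
proof
  let ?H = "{B. fm.Ex B \<in> ClK (L \<union> sk_syms L)}"
  assume "inconsistent (X \<union> hax ` ?H)"
  from incons_compact[OF this] obtain T0 where T0: "T0 \<subseteq> X \<union> hax ` ?H" "finite T0" "inconsistent T0"
    by blast
  have sub: "T0 \<inter> hax ` ?H \<subseteq> hax ` ?H" by blast
  have fin: "finite (T0 \<inter> hax ` ?H)" using T0(2) by blast
  from finite_subset_image[OF fin sub] obtain C where C: "C \<subseteq> ?H" "finite C" "T0 \<inter> hax ` ?H = hax ` C"
    by blast
  have "T0 \<subseteq> X \<union> hax ` C" using T0(1) C(3) by blast
  then have "inconsistent (X \<union> hax ` C)" using T0(3) incons_mono by blast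
  moreover have "\<not> inconsistent (X \<union> hax ` C)" using hax_finite[OF X sf C(2)] C(1) by blast
  ultimately show False by blast
qed


lemma IndP_eq:
  assumes "\<And>d. hol D F P (e1(x := d)) \<phi>1 = hol D F P (e2(x := d)) \<phi>2"
  shows "IndP D F P z s x \<phi>1 e1 = IndP D F P z s x \<phi>2 e2"
  unfolding IndP_def assms ..

lemma ind_subst:
  assumes S: "struct D F" and \<sigma>: "\<forall>v. \<sigma> v = Var v \<or> fv_tm (\<sigma> v) = {}"
    and I: "\<forall>e. range e \<subseteq> D \<longrightarrow> IndP D F P z s x \<gamma> e"
    and e: "range e \<subseteq> D"
  shows "IndP D F P z s x (subst \<sigma> \<gamma>) e"
proof (cases "\<sigma> x = Var x")
  case True
  define e'' where "e'' v = ev F e (\<sigma> v)" for v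
  have r: "range e'' \<subseteq> D" using ev_in[OF S e] by (auto simp: e''_def)
  have "IndP D F P z s x \<gamma> e''" using I r by blast
  moreover have "hol D F P (e(x := d)) (subst \<sigma> \<gamma>) = hol D F P (e''(x := d)) \<gamma>" for d
    unfolding hol_subst
  proof (rule hol_cong_fv)
    fix v assume "v \<in> fv \<gamma>"
    show "ev F (e(x := d)) (\<sigma> v) = (e''(x := d)) v"
    proof (cases "v = x")
      case True then show ?thesis using \<open>\<sigma> x = Var x\<close> by simp
    next
      case False
      show ?thesis
      proof (cases "\<sigma> v = Var v")
        case True then show ?thesis using False by (simp add: e''_def)
      next
        case c: False
        then have "fv_tm (\<sigma> v) = {}" using \<sigma> by blast
        then have "ev F (e(x := d)) (\<sigma> v) = ev F e (\<sigma> v)" by (intro ev_cong_fv) auto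
        then show ?thesis using False by (simp add: e''_def)
      qed
    qed
  qed
  ultimately show ?thesis using IndP_eq[of D F P e x "subst \<sigma> \<gamma>" e'' \<gamma> z s] by blast
next
  case False
  then have g: "fv_tm (\<sigma> x) = {}" using \<sigma> by blast
  have "x \<notin> fv (subst \<sigma> \<gamma>)"
  proof
    assume "x \<in> fv (subst \<sigma> \<gamma>)"
    then obtain v where "v \<in> fv \<gamma>" "x \<in> fv_tm (\<sigma> v)" by (auto simp: fv_subst)
    then show False using \<sigma> g by (metis empty_iff fv_tm.simps(1) singletonD)
  qed
  then have "hol D F P (e(x := d)) (subst \<sigma> \<gamma>) = hol D F P e (subst \<sigma> \<gamma>)" for d
    by (intro hol_cong_fv) auto
  then show ?thesis by (simp add: IndP_def)
qed

lemma chain_fin: "finite S \<Longrightarrow> S \<subseteq> (\<Union>i. f i) \<Longrightarrow> mono (f :: nat \<Rightarrow> 'a set) \<Longrightarrow> \<exists>i. S \<subseteq> f i"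
proof (induction S rule: finite_induct)
  case empty then show ?case by simp
next
  case (insert a S)
  then obtain i j where "S \<subseteq> f i" "a \<in> f j" by blast
  moreover have "f i \<subseteq> f (max i j)" "f j \<subseteq> f (max i j)"
    using monoD[OF insert.prems(2)] by auto
  ultimately have "insert a S \<subseteq> f (max i j)" by blast
  then show ?case by blast
qed

lemma finite_syms_tm: "finite (syms_tm t)"
  by (induction t rule: tm_ind) auto

context
  fixes L :: "('f,'p) lsym set" and T \<Gamma> :: "('f,'p) fm set" and z s :: 'f
begin

definition stage where "stage i = (GSI_step z s \<Gamma> ^^ i) (sk_ex_theory L T)"

definition Nof where "Nof LT = sk_ex (IND z s (at_most_one_fv (ground_inst \<Gamma> (fst LT))))"

lemma stage_0: "stage 0 = (L \<union> (\<Union>A\<in>sk_ex T. syms A), sk_ex T)"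
  by (simp add: stage_def sk_ex_theory_def)

lemma stage_Suc: "stage (Suc i) = (fst (stage i) \<union> (\<Union>A\<in>Nof (stage i). syms A), snd (stage i) \<union> Nof (stage i))"
  by (simp add: stage_def GSI_step_def Nof_def Let_def)

lemma GSI_stage: "GSI_omega z s \<Gamma> (sk_ex_theory L T) = (\<Union>i. snd (stage i))"
  by (simp add: GSI_omega_def stage_def)

lemma mono_fst: "mono (\<lambda>i. fst (stage i))"
  unfolding mono_iff_le_Suc by (auto simp: stage_Suc)

lemma mono_snd: "mono (\<lambda>i. snd (stage i))"
  unfolding mono_iff_le_Suc by (auto simp: stage_Suc)

definition Kz where "Kz = L \<union> sk_syms L"

definition good where
  "good A \<longleftrightarrow> A \<in> sk_ex T \<or> (\<exists>x \<gamma> \<sigma>. \<gamma> \<in> \<Gamma> \<and> (\<forall>v. \<sigma> v = Var v \<or> ground_L_term Kz (\<sigma> v)) \<and>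
       A = sk QEx (ind_ax z s x (subst \<sigma> \<gamma>)))"

lemma invariant:
  assumes "FS (Sym z) 0 \<in> L" "FS (Sym s) 1 \<in> L" "is_L_theory L T" "\<forall>\<gamma>\<in>\<Gamma>. is_L_formula L \<gamma>"
  shows "L \<subseteq> fst (stage i) \<and> fst (stage i) \<subseteq> Kz \<and> snd (stage i) \<subseteq> ClK (fst (stage i)) \<and>
         (\<forall>A\<in>snd (stage i). good A)"
proof (induction i)
  case 0
  have "syms (sk QEx A) \<subseteq> Kz" if "A \<in> T" for A
    using assms(3) that by (intro syms_sk[of A L QEx, folded Kz_def]) (auto simp: is_L_theory_def is_L_formula_def Kz_def)
  moreover have "fv (sk QEx A) = {}" if "A \<in> T" for A
    using assms(3) that fv_sk[of QEx A] by (auto simp: is_L_theory_def)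
  ultimately show ?case
    by (auto simp: stage_0 Kz_def ClK_def sk_ex_def good_def)
next
  case (Suc i)
  let ?L = "fst (stage i)"
  have N: "A \<in> Nof (stage i) \<Longrightarrow> good A \<and> fv A = {} \<and> syms A \<subseteq> Kz" for A
  proof -
    assume "A \<in> Nof (stage i)"
    then obtain x \<gamma> \<sigma> where g: "\<gamma> \<in> \<Gamma>" "\<forall>v. \<sigma> v = Var v \<or> ground_L_term ?L (\<sigma> v)"
        and A: "A = sk QEx (ind_ax z s x (subst \<sigma> \<gamma>))"
      by (auto simp: Nof_def sk_ex_def IND_def at_most_one_fv_def ground_inst_def)
    have gK: "\<forall>v. \<sigma> v = Var v \<or> ground_L_term Kz (\<sigma> v)"
    proof
      fix v
      have "\<sigma> v = Var v \<or> ground_L_term ?L (\<sigma> v)" using g(2) by blast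
      moreover have "?L \<subseteq> Kz" using Suc.IH by blast
      ultimately show "\<sigma> v = Var v \<or> ground_L_term Kz (\<sigma> v)" unfolding ground_L_term_def by blast
    qed
    have "syms (subst \<sigma> \<gamma>) \<subseteq> Kz"
    proof -
      have "syms \<gamma> \<subseteq> Kz" using assms(4) g(1) by (auto simp: is_L_formula_def Kz_def)
      moreover have "syms_tm (\<sigma> v) \<subseteq> Kz" for v using gK[rule_format, of v] by (auto simp: ground_L_term_def)
      ultimately show ?thesis by (auto simp: syms_subst)
    qed
    then have "syms (ind_ax z s x (subst \<sigma> \<gamma>)) \<subseteq> Kz"
      using syms_ind_ax[of z s x "subst \<sigma> \<gamma>"] assms(1,2) by (auto simp: Kz_def)
    then have "syms A \<subseteq> Kz" unfolding A Kz_def by (intro syms_sk) (simp add: Kz_def)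
    moreover have "fv A = {}" using fv_sk[of QEx "ind_ax z s x (subst \<sigma> \<gamma>)"] fv_ind_ax[of z s x "subst \<sigma> \<gamma>"] A by auto
    moreover have "good A" using g(1) gK A by (auto simp: good_def)
    ultimately show ?thesis by blast
  qed
  show ?case
  proof (intro conjI)
    show "L \<subseteq> fst (stage (Suc i))" using Suc by (auto simp: stage_Suc)
    show "fst (stage (Suc i)) \<subseteq> Kz" using Suc N by (auto simp: stage_Suc)
    show "snd (stage (Suc i)) \<subseteq> ClK (fst (stage (Suc i)))"
      using Suc N by (auto simp: stage_Suc ClK_def)
    show "\<forall>A\<in>snd (stage (Suc i)). good A" using Suc N by (auto simp: stage_Suc)
  qed
qed

lemma syms_ind_inst:
  assumes "FS (Sym z) 0 \<in> L" "FS (Sym s) 1 \<in> L" "\<forall>\<gamma>\<in>\<Gamma>. is_L_formula L \<gamma>"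
    and "\<gamma> \<in> \<Gamma>" "\<forall>v. \<sigma> v = Var v \<or> ground_L_term Kz (\<sigma> v)"
  shows "syms (ind_ax z s x (subst \<sigma> \<gamma>)) \<subseteq> Kz"
proof -
  have "syms \<gamma> \<subseteq> Kz" using assms(3,4) by (auto simp: is_L_formula_def Kz_def)
  moreover have "syms_tm (\<sigma> v) \<subseteq> Kz" for v using assms(5)[rule_format, of v] by (auto simp: ground_L_term_def)
  ultimately have "syms (subst \<sigma> \<gamma>) \<subseteq> Kz" by (auto simp: syms_subst)
  then show ?thesis
    using syms_ind_ax[of z s x "subst \<sigma> \<gamma>"] assms(1,2) by (auto simp: Kz_def)
qed

lemma X_ClK:
  assumes "FS (Sym z) 0 \<in> L" "FS (Sym s) 1 \<in> L" "is_L_theory L T" "\<forall>\<gamma>\<in>\<Gamma>. is_L_formula L \<gamma>"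
  shows "T \<union> IND z s \<Gamma> \<subseteq> ClK L"
proof
  fix A assume "A \<in> T \<union> IND z s \<Gamma>"
  then show "A \<in> ClK L"
  proof
    assume "A \<in> T" then show ?thesis using assms(3) by (auto simp: is_L_theory_def is_L_formula_def ClK_def)
  next
    assume "A \<in> IND z s \<Gamma>"
    then obtain x \<gamma> where g: "\<gamma> \<in> \<Gamma>" "A = ind_ax z s x \<gamma>" by (auto simp: IND_def)
    have "syms \<gamma> \<subseteq> L" using assms(4) g(1) by (auto simp: is_L_formula_def)
    then have "syms A \<subseteq> L" using syms_ind_ax[of z s x \<gamma>] assms(1,2) g(2) by auto
    then show ?thesis using fv_ind_ax[of z s x \<gamma>] g(2) by (auto simp: ClK_def)
  qed
qed

lemma dirA:
  assumes sf: "skolem_free L" and z: "FS (Sym z) 0 \<in> L" and sL: "FS (Sym s) 1 \<in> L"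
    and TL: "is_L_theory L T" and GL: "\<forall>\<gamma>\<in>\<Gamma>. is_L_formula L \<gamma>"
    and cons: "\<not> inconsistent (T \<union> IND z s \<Gamma>)"
  shows "\<not> inconsistent (GSI_omega z s \<Gamma> (sk_ex_theory L T))"
proof -
  let ?X = "T \<union> IND z s \<Gamma>"
  let ?H = "?X \<union> hax ` {B. fm.Ex B \<in> ClK Kz}"
  have XC: "?X \<subseteq> ClK L" by (rule X_ClK[OF z sL TL GL])
  have Hc: "\<not> inconsistent ?H" using henkin_cons[OF XC cons sf] by (simp add: Kz_def)
  have HK: "?H \<subseteq> ClK Kz"
  proof
    fix A assume "A \<in> ?H"
    then show "A \<in> ClK Kz"
    proof
      assume "A \<in> ?X" then show ?thesis using XC by (auto simp: ClK_def Kz_def)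
    next
      assume "A \<in> hax ` {B. fm.Ex B \<in> ClK Kz}"
      then obtain B where B: "fm.Ex B \<in> ClK Kz" "A = hax B" by auto
      have sB: "syms B \<subseteq> L \<union> sk_syms L" using B(1) by (auto simp: ClK_def Kz_def)
      have "{n. Suc n \<in> fv B} = {}" using B(1) by (auto simp: ClK_def)
      then have "FS (Sk QEx B) 0 \<in> sk_syms L" using sk_sym_in[OF sB, of QEx] by simp
      then have "syms A \<subseteq> Kz" using syms_hax[of B] sB B(2) by (auto simp: Kz_def)
      moreover have "fv A = {}" using fv_hax[of B] B by (auto simp: ClK_def)
      ultimately show ?thesis by (simp add: ClK_def)
    qed
  qed
  obtain M where M: "?H \<subseteq> M" "maxcons Kz M" using max_exists[OF HK Hc] by blast
  have c0: "Fn (Sym z) [] \<in> CT Kz" using z by (simp add: CT_def Kz_def)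
  interpret tmod Kz M "Fn (Sym z) []"
    by unfold_locales (use M(2) c0 in auto)
  have hk: henkin
    unfolding henkin_def
  proof (intro conjI allI impI)
    fix A assume A: "fm.Ex A \<in> M"
    then have AK: "fm.Ex A \<in> ClK Kz" using M_sub by blast
    then have "hax A \<in> M" using M(1) by blast
    then have "prov M (inst (Fn (Sk QEx A) []) A)"
      using A by (auto simp: hax_def intro: prov.mp prov.hyp)
    moreover have ct: "Fn (Sk QEx A) [] \<in> CT Kz"
    proof -
      have sA: "syms A \<subseteq> L \<union> sk_syms L" using AK by (auto simp: ClK_def Kz_def)
      have "{n. Suc n \<in> fv A} = {}" using AK by (auto simp: ClK_def)
      then show ?thesis using sk_sym_in[OF sA, of QEx] by (simp add: CT_def Kz_def)
    qed
    ultimately show "\<exists>t\<in>CT Kz. inst t A \<in> M" using AK by (auto intro: prov_in inst_ClK)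
  next
    fix A assume A: "fm.All A \<in> ClK Kz" "fm.All A \<notin> M"
    then have nA: "Neg (fm.All A) \<in> M" using neg_in by blast
    have "prov M (fm.All (Imp (Neg (Neg A)) A))" by (rule prov.gen, rule prov.taut) (simp add: tautology_def Imp_def)
    then have "prov M (Imp (fm.All (Neg (Neg A))) (fm.All A))" by (rule prov.mp[OF prov.all_dist])
    then have "prov M (Neg (fm.All (Neg (Neg A))))"
      using prov.hyp[OF nA] by (rule prov_taut2) (auto simp: tautology_def Imp_def)
    then have "prov M (fm.Ex (Neg A))"
      using prov.ex_def2[of M "Neg A"] by (rule prov_taut2) (auto simp: tautology_def Imp_def)
    moreover have EK: "fm.Ex (Neg A) \<in> ClK Kz" using A(1) by (simp add: ClK_def)
    ultimately have "fm.Ex (Neg A) \<in> M" by (rule prov_in)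
    then have "prov M (Imp (fm.Ex (Neg A)) (inst (Fn (Sk QEx (Neg A)) []) (Neg A)))"
      using M(1) EK by (auto simp: hax_def intro: prov.hyp)
    then have "prov M (Neg (inst (Fn (Sk QEx (Neg A)) []) A))"
      using \<open>fm.Ex (Neg A) \<in> M\<close> by (auto simp: inst_Neg intro: prov.mp prov.hyp)
    moreover have ct: "Fn (Sk QEx (Neg A)) [] \<in> CT Kz"
    proof -
      have sA: "syms (Neg A) \<subseteq> L \<union> sk_syms L" using A(1) by (auto simp: ClK_def Kz_def)
      have "{n. Suc n \<in> fv (Neg A)} = {}" using A(1) by (auto simp: ClK_def)
      then show ?thesis using sk_sym_in[OF sA, of QEx] by (simp add: CT_def Kz_def)
    qed
    moreover have iK: "inst (Fn (Sk QEx (Neg A)) []) A \<in> ClK Kz" using A(1) ct by (intro inst_ClK) auto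
    ultimately have "Neg (inst (Fn (Sk QEx (Neg A)) []) A) \<in> M"
      by (intro prov_in) (auto simp: ClK_def)
    then show "\<exists>t\<in>CT Kz. inst t A \<notin> M" using neg_in[OF iK] ct by blast
  qed
  have st: "struct TD (xsym TD TF TP L)" by (rule struct_x[OF struct_T])
  have mX: "models TD (xsym TD TF TP L) TP A" if "A \<in> ?X" for A
  proof -
    have "models TD TF TP A" using model_T hk M(1) that by blast
    moreover have "syms A \<subseteq> L" using XC that by (auto simp: ClK_def)
    then have "hol TD TF TP e A = hol TD (xsym TD TF TP L) TP e A" for e
      by (intro hol_cong_F) (auto simp: xsym_L)
    ultimately show ?thesis by (simp add: models_def)
  qed
  have wt: "wit TD (xsym TD TF TP L) TP Q B" if "FS (Sk Q B) (card {n. Suc n \<in> fv B}) \<in> sk_syms L" for Q B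
    using that sf by (intro wit_x struct_T) (auto simp: skolem_free_def)
  have mG: "models TD (xsym TD TF TP L) TP A" if "A \<in> GSI_omega z s \<Gamma> (sk_ex_theory L T)" for A
  proof -
    have "A \<in> (\<Union>i. snd (stage i))" using that unfolding GSI_stage .
    then obtain i where "A \<in> snd (stage i)" by blast
    then have "good A" using invariant[OF z sL TL GL, of i] by blast
    then show ?thesis
      unfolding good_def
    proof
      assume "A \<in> sk_ex T"
      then obtain A0 where A0: "A0 \<in> T" "A = sk QEx A0" by (auto simp: sk_ex_def)
      have sA0: "syms A0 \<subseteq> L \<union> sk_syms L" using XC A0(1) by (auto simp: ClK_def)
      show ?thesis using mX[of A0] A0 sk_complete[OF st wt sA0] by (auto simp: models_def)
    next
      assume "\<exists>x \<gamma> \<sigma>. \<gamma> \<in> \<Gamma> \<and> (\<forall>v. \<sigma> v = Var v \<or> ground_L_term Kz (\<sigma> v)) \<and>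
       A = sk QEx (ind_ax z s x (subst \<sigma> \<gamma>))"
      then obtain x \<gamma> \<sigma> where g: "\<gamma> \<in> \<Gamma>" "\<forall>v. \<sigma> v = Var v \<or> ground_L_term Kz (\<sigma> v)"
        and A: "A = sk QEx (ind_ax z s x (subst \<sigma> \<gamma>))" by blast
      have "ind_ax z s x \<gamma> \<in> ?X" using g(1) by (auto simp: IND_def)
      then have "models TD (xsym TD TF TP L) TP (ind_ax z s x \<gamma>)" by (rule mX)
      then have I: "\<forall>e. range e \<subseteq> TD \<longrightarrow> IndP TD (xsym TD TF TP L) TP z s x \<gamma> e"
        using hol_ind_ax[OF st] TD_ne by (auto simp: models_def)
      have \<sigma>: "\<forall>v. \<sigma> v = Var v \<or> fv_tm (\<sigma> v) = {}" using g(2) by (auto simp: ground_L_term_def)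
      have "\<forall>e. range e \<subseteq> TD \<longrightarrow> IndP TD (xsym TD TF TP L) TP z s x (subst \<sigma> \<gamma>) e"
        using ind_subst[OF st \<sigma> I] by blast
      then have h: "hol TD (xsym TD TF TP L) TP e (ind_ax z s x (subst \<sigma> \<gamma>))" for e
        using hol_ind_ax[OF st] by blast
      have sI: "syms (ind_ax z s x (subst \<sigma> \<gamma>)) \<subseteq> L \<union> sk_syms L"
        using syms_ind_inst[OF z sL GL g(1,2)] by (simp add: Kz_def)
      show ?thesis using h A sk_complete[OF st wt sI] by (auto simp: models_def)
    qed
  qed
  show ?thesis using sound_consistent[OF st] mG by blast
qed

lemma dirB:
  assumes z: "FS (Sym z) 0 \<in> L" and sL: "FS (Sym s) 1 \<in> L"
    and TL: "is_L_theory L T" and GL: "\<forall>\<gamma>\<in>\<Gamma>. is_L_formula L \<gamma>"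
    and cons: "\<not> inconsistent (GSI_omega z s \<Gamma> (sk_ex_theory L T))"
  shows "\<not> inconsistent (T \<union> IND z s \<Gamma>)"
proof -
  define Lw where "Lw = (\<Union>i. fst (stage i))"
  let ?G = "GSI_omega z s \<Gamma> (sk_ex_theory L T)"
  have GC: "?G \<subseteq> ClK Lw"
  proof
    fix A assume "A \<in> ?G"
    then have "A \<in> (\<Union>i. snd (stage i))" unfolding GSI_stage .
    then obtain i where i: "A \<in> snd (stage i)" by blast
    then have "A \<in> ClK (fst (stage i))" using invariant[OF z sL TL GL, of i] by blast
    moreover have "fst (stage i) \<subseteq> Lw" by (auto simp: Lw_def)
    ultimately show "A \<in> ClK Lw" by (auto simp: ClK_def)
  qed
  obtain M where M: "?G \<subseteq> M" "maxcons Lw M" using max_exists[OF GC cons] by blast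
  have L0: "L \<subseteq> Lw" using invariant[OF z sL TL GL, of 0] by (auto simp: Lw_def)
  have c0: "Fn (Sym z) [] \<in> CT Lw" using z L0 by (auto simp: CT_def)
  interpret tmod Lw M "Fn (Sym z) []"
    by unfold_locales (use M(2) c0 in auto)
  have mG: "models TD TF TP A" if "A \<in> ?G" for A
  proof -
    have "A \<in> (\<Union>i. snd (stage i))" using that unfolding GSI_stage .
    then obtain i where "A \<in> snd (stage i)" by blast
    then have "good A" using invariant[OF z sL TL GL, of i] by blast
    then obtain B where "A = sk QEx B" unfolding good_def sk_ex_def by blast
    then have "uni True A" using uni_sk[of QEx B] by simp
    then show ?thesis using model_T M(1) that by blast
  qed
  have mT: "models TD TF TP A" if "A \<in> T" for A
  proof -
    have "sk QEx A \<in> snd (stage 0)" using that by (simp add: stage_0 sk_ex_def)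
    then have "sk QEx A \<in> ?G" unfolding GSI_stage by blast
    then have "models TD TF TP (sk QEx A)" by (rule mG)
    then show ?thesis using sk_sound[OF struct_T] by (auto simp: models_def)
  qed
  have mI: "models TD TF TP (ind_ax z s x \<gamma>)" if g: "\<gamma> \<in> \<Gamma>" for x \<gamma>
  proof -
    have "IndP TD TF TP z s x \<gamma> e" if e: "range e \<subseteq> TD" for e
    proof -
      define tv where "tv v = (SOME t. t \<in> CT Lw \<and> e v = cls t)" for v
      have tv: "tv v \<in> CT Lw \<and> e v = cls (tv v)" for v
      proof -
        have "e v \<in> TD" using e by blast
        then have "\<exists>t. t \<in> CT Lw \<and> e v = cls t" by (auto simp: TD_def)
        then show ?thesis unfolding tv_def by (rule someI_ex)
      qed
      define V where "V = fv \<gamma> - {x}"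
      define \<sigma> where "\<sigma> v = (if v \<in> V then tv v else Var v)" for v
      have fin: "finite (\<Union>v\<in>V. syms_tm (tv v))" by (auto simp: V_def finite_syms_tm)
      have "(\<Union>v\<in>V. syms_tm (tv v)) \<subseteq> (\<Union>i. fst (stage i))"
        using tv by (auto simp: CT_def Lw_def)
      then obtain i where i: "(\<Union>v\<in>V. syms_tm (tv v)) \<subseteq> fst (stage i)"
        using chain_fin[OF fin _ mono_fst] by blast
      have gi: "\<forall>v. \<sigma> v = Var v \<or> ground_L_term (fst (stage i)) (\<sigma> v)"
        using tv i by (auto simp: \<sigma>_def ground_L_term_def CT_def)
      have fvs: "fv (subst \<sigma> \<gamma>) \<subseteq> {x}"
        using tv by (auto simp: fv_subst \<sigma>_def V_def CT_def split: if_splits)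
      then have "card (fv (subst \<sigma> \<gamma>)) \<le> 1"
        using card_mono[of "{x}" "fv (subst \<sigma> \<gamma>)"] by simp
      then have "subst \<sigma> \<gamma> \<in> at_most_one_fv (ground_inst \<Gamma> (fst (stage i)))"
        using g gi by (auto simp: at_most_one_fv_def ground_inst_def)
      then have "sk QEx (ind_ax z s x (subst \<sigma> \<gamma>)) \<in> Nof (stage i)"
        by (auto simp: Nof_def sk_ex_def IND_def)
      then have "sk QEx (ind_ax z s x (subst \<sigma> \<gamma>)) \<in> snd (stage (Suc i))"
        by (simp add: stage_Suc)
      then have "sk QEx (ind_ax z s x (subst \<sigma> \<gamma>)) \<in> ?G" unfolding GSI_stage by blast
      then have "models TD TF TP (sk QEx (ind_ax z s x (subst \<sigma> \<gamma>)))" by (rule mG)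
      then have "hol TD TF TP e (ind_ax z s x (subst \<sigma> \<gamma>))"
        using sk_sound[OF struct_T e] by (auto simp: models_def e)
      then have ip: "IndP TD TF TP z s x (subst \<sigma> \<gamma>) e"
        using hol_ind_ax[OF struct_T] e by blast
      have "hol TD TF TP (e(x := d)) (subst \<sigma> \<gamma>) = hol TD TF TP (e(x := d)) \<gamma>" for d
        unfolding hol_subst
      proof (rule hol_cong_fv)
        fix v assume v: "v \<in> fv \<gamma>"
        show "ev TF (e(x := d)) (\<sigma> v) = (e(x := d)) v"
        proof (cases "v = x")
          case True then show ?thesis by (simp add: \<sigma>_def V_def)
        next
          case False
          then have "v \<in> V" using v by (simp add: V_def)
          then show ?thesis using False tv[of v] ev_T by (simp add: \<sigma>_def)
        qed
      qed
      then show ?thesis using ip IndP_eq[of TD TF TP e x "subst \<sigma> \<gamma>" e \<gamma> z s] by blast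
    qed
    then show ?thesis using hol_ind_ax[OF struct_T] by (auto simp: models_def)
  qed
  have "\<forall>A\<in>T \<union> IND z s \<Gamma>. models TD TF TP A"
    using mT mI by (auto simp: IND_def)
  then show ?thesis by (rule sound_consistent[OF struct_T])
qed

end

theorem proposition14:
  fixes L :: "('f, 'p) lsym set" and T \<Gamma> :: "('f, 'p) fm set" and z s :: 'f
  assumes "skolem_free L"
    and "FS (Sym z) 0 \<in> L" and "FS (Sym s) 1 \<in> L"
    and "is_L_theory L T"
    and "\<forall>\<gamma>\<in>\<Gamma>. is_L_formula L \<gamma>"
  shows "inconsistent (GSI_omega z s \<Gamma> (sk_ex_theory L T))
         \<longleftrightarrow> inconsistent (T \<union> IND z s \<Gamma>)"
  using dirA[OF assms] dirB[OF assms(2-5)] by blast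


end
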